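(* Assume the $N$-cell system is $1$-controllable and let $\theta_j\in\partial D^{(j)}$ for some $1\le j\le N$. Then there exists an admissible path (of the $N$-cell system) between $\theta_j$ and $\partial\Gamma^{(1)}_{\rm L}$, and likewise one between $\theta_j$ and $\partial\Gamma^{(N)}_{\rm R}$.
   Context: Cell geometry. Let $\Gamma_{\rm box}\subset\mathbb{R}^2$ be a bounded connected closed domain such that $(x,y)\in\Gamma_{\rm box}$ implies $x\in[0,L]$. Its boundary is $\partial\Gamma_{\rm box}=\partial\Gamma_{\rm L}\cup\partial\Gamma_{\rm R}\cup\bigcup_{k=1}^b\partial\Gamma_k$, where $\partial\Gamma_{\rm L}=\{(0,y):y\in[-a,a]\}$ and $\partial\Gamma_{\rm R}=\{(L,y):y\in[-a,a]\}$ are the two "openings" ($a>0$), and each $\partial\Gamma_k$ is an arc of a circle $C_k$ with center $c_k$, the arcs being oriented so that $\partial\Gamma_{\rm box}$ is everywhere dispersing. In the interior of $\Gamma_{\rm box}$ lies a closed disk $D$ of center $(L/2,0)$ and radius $r$ with $\partial D\cap\partial\Gamma_{\rm box}=\emptyset$, and for every $z\in\partial\Gamma_{\rm box}$ the segment from the disk center to $z$ meets $\partial\Gamma_{\rm box}$ only at $z$. The cell is $\Gamma=\Gamma_{\rm box}\setminus D$; its corners are the points where two boundary pieces meet. Illumination and 1-controllability. For $k\in\{1,\dots,b\}$, let $I_k\subset\partial D$ be the largest open connected set of points $\theta\in\partial D$ such that a straight line leaving $\theta$ in some direction returns to $\theta$ after exactly one (specular) reflection, occurring on $\partial\Gamma_k$.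 The cell is $1$-controllable if $\bigcup_k I_k=\partial D$. Admissible path in a cell. A curve $\gamma:[0,1]\to\Gamma$, continuous and piecewise differentiable on $(0,1)$, is admissible if: (1) it consists of finitely many straight segments meeting at $\partial\Gamma_{\rm box}\cup\partial D$; (2) at meeting points on $\partial\Gamma_{\rm box}$ incoming and outgoing angles are equal; (3) only $\gamma(0),\gamma(1)$ may lie in $\partial\Gamma_{\rm L}\cup\partial\Gamma_{\rm R}$; (4) $\gamma$ never meets a corner; (5) $\gamma$ is nowhere tangent to $\partial D$. N-cell system. The system consists of $N$ identical copies $\Gamma^{(1)},\dots,\Gamma^{(N)}$ of the cell placed side by side horizontally (the $\ell$th copy translated by $((\ell-1)L,0)$), with disks $D^{(\ell)}$ and openings $\partial\Gamma^{(\ell)}_{\rm L},\partial\Gamma^{(\ell)}_{\rm R}$; the right opening of cell $\ell$ coincides with the left opening of cell $\ell+1$ and particles cross it freely. $\partial\Gamma^{(1)}_{\rm L}$ and $\partial\Gamma^{(N)}_{\rm R}$ are the exits to the baths. The system is $1$-controllable if the cell is. An admissible path of the $N$-cell system is a continuous path composed of finitely many admissible paths in the individual cells, concatenated at the internal openings. *)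

theory Defs
  imports "HOL-Analysis.Analysis"
begin

text \<open>Points of the plane are complex numbers; the x-coordinate is Re, the y-coordinate is Im.\<close>

definition left_opening :: "real \<Rightarrow> complex set" where
  "left_opening a = {Complex 0 y | y. -a \<le> y \<and> y \<le> a}"

definition right_opening :: "real \<Rightarrow> real \<Rightarrow> complex set" where
  "right_opening L a = {Complex L y | y. -a \<le> y \<and> y \<le> a}"

definition shift :: "real \<Rightarrow> complex set \<Rightarrow> complex set" where
  "shift s A = (\<lambda>z. z + complex_of_real s) ` A"

definition disk_center :: "real \<Rightarrow> complex" where
  "disk_center L = Complex (L/2) 0"

definition bpiece :: "real \<Rightarrow> real \<Rightarrow> nat \<Rightarrow> (nat \<Rightarrow> complex set) \<Rightarrow> nat \<Rightarrow> complex set" where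
  "bpiece L a b Arc k =
     (if k = 0 then left_opening a else if k = Suc b then right_opening L a else Arc k)"

definition corners :: "real \<Rightarrow> real \<Rightarrow> nat \<Rightarrow> (nat \<Rightarrow> complex set) \<Rightarrow> complex set" where
  "corners L a b Arc =
     {z. \<exists>i j. i \<le> Suc b \<and> j \<le> Suc b \<and> i \<noteq> j \<and> z \<in> bpiece L a b Arc i \<and> z \<in> bpiece L a b Arc j}"

text \<open>Standing geometric assumptions on a cell.  c k, rho k: center and radius of circle C_k;
  Arc k: the boundary arc on C_k; Gbox: the box.\<close>
definition cell_geometry ::
  "real \<Rightarrow> real \<Rightarrow> real \<Rightarrow> nat \<Rightarrow> (nat \<Rightarrow> complex) \<Rightarrow> (nat \<Rightarrow> real) \<Rightarrow> (nat \<Rightarrow> complex set)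
    \<Rightarrow> complex set \<Rightarrow> bool" where
  "cell_geometry L a r b c rho Arc Gbox \<longleftrightarrow>
     L > 0 \<and> a > 0 \<and> r > 0 \<and>
     bounded Gbox \<and> connected Gbox \<and> closed Gbox \<and>
     (\<exists>U. open U \<and> connected U \<and> Gbox = closure U) \<and>
     (\<forall>z\<in>Gbox. 0 \<le> Re z \<and> Re z \<le> L) \<and>
     frontier Gbox = left_opening a \<union> right_opening L a \<union> (\<Union>k\<in>{1..b}. Arc k) \<and>
     (\<forall>k\<in>{1..b}.
        rho k > 0 \<and>
        (\<exists>\<alpha> \<beta>. \<alpha> < \<beta> \<and> \<beta> < \<alpha> + 2 * pi \<and>
           Arc k = (\<lambda>t. c k + complex_of_real (rho k) * cis t) ` {\<alpha>..\<beta>}) \<and>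
        \<comment> \<open>dispersing: near the arc, the box lies outside the circle C_k\<close>
        (\<exists>e>0. \<forall>z\<in>Gbox. (\<exists>w\<in>Arc k. dist z w < e) \<longrightarrow> rho k \<le> dist z (c k))) \<and>
     cball (disk_center L) r \<subseteq> interior Gbox \<and>
     (\<forall>z\<in>frontier Gbox. closed_segment (disk_center L) z \<inter> frontier Gbox = {z})"

text \<open>The cell: box minus the (open interior of the) disk, so that the circle belongs to the cell.\<close>
definition cell :: "real \<Rightarrow> real \<Rightarrow> complex set \<Rightarrow> complex set" where
  "cell L r Gbox = Gbox - ball (disk_center L) r"

text \<open>Specular reflection at a point with normal n: the outgoing direction w is a positive
  multiple of the mirror image of the incoming direction u (equal angles).\<close>
definition specular :: "complex \<Rightarrow> complex \<Rightarrow> complex \<Rightarrow> bool" where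
  "specular n u w \<longleftrightarrow> (\<exists>s>0. w = s *\<^sub>R (u - (2 * (u \<bullet> n) / (n \<bullet> n)) *\<^sub>R n))"

text \<open>Points theta of the circle dD from which a straight line returns to theta after exactly one
  specular reflection, occurring on the arc k.\<close>
definition returns_via ::
  "real \<Rightarrow> real \<Rightarrow> real \<Rightarrow> nat \<Rightarrow> (nat \<Rightarrow> complex) \<Rightarrow> (nat \<Rightarrow> complex set) \<Rightarrow> complex set
    \<Rightarrow> nat \<Rightarrow> complex \<Rightarrow> bool" where
  "returns_via L a r b c Arc Gbox k \<theta> \<longleftrightarrow>
     \<theta> \<in> sphere (disk_center L) r \<and>
     (\<exists>p\<in>Arc k. p \<notin> corners L a b Arc \<and> p \<noteq> \<theta> \<and>
        open_segment \<theta> p \<inter> (frontier Gbox \<union> cball (disk_center L) r) = {} \<and>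
        specular (p - c k) (p - \<theta>) (\<theta> - p))"

definition illum ::
  "real \<Rightarrow> real \<Rightarrow> real \<Rightarrow> nat \<Rightarrow> (nat \<Rightarrow> complex) \<Rightarrow> (nat \<Rightarrow> complex set) \<Rightarrow> complex set
    \<Rightarrow> nat \<Rightarrow> complex set" where
  "illum L a r b c Arc Gbox k =
     {\<theta>. \<exists>U. openin (top_of_set (sphere (disk_center L) r)) U \<and> connected U \<and> \<theta> \<in> U \<and>
            (\<forall>\<eta>\<in>U. returns_via L a r b c Arc Gbox k \<eta>)}"

definition one_controllable ::
  "real \<Rightarrow> real \<Rightarrow> real \<Rightarrow> nat \<Rightarrow> (nat \<Rightarrow> complex) \<Rightarrow> (nat \<Rightarrow> complex set) \<Rightarrow> complex set \<Rightarrow> bool" where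
  "one_controllable L a r b c Arc Gbox \<longleftrightarrow>
     (\<Union>k\<in>{1..b}. illum L a r b c Arc Gbox k) = sphere (disk_center L) r"

text \<open>Admissible path in a single cell.  The curve gamma on [0,1] is piecewise affine with
  breakpoints ts (strictly increasing, from 0 to 1) and vertices vs.\<close>
definition cell_admissible ::
  "real \<Rightarrow> real \<Rightarrow> real \<Rightarrow> nat \<Rightarrow> (nat \<Rightarrow> complex) \<Rightarrow> (nat \<Rightarrow> complex set) \<Rightarrow> complex set
    \<Rightarrow> (real \<Rightarrow> complex) \<Rightarrow> bool" where
  "cell_admissible L a r b c Arc Gbox \<gamma> \<longleftrightarrow>
     (\<forall>t\<in>{0..1}. \<gamma> t \<in> cell L r Gbox) \<and>
     (\<exists>vs ts.
        length vs \<ge> 2 \<and> length ts = length vs \<and>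
        ts ! 0 = 0 \<and> ts ! (length ts - 1) = 1 \<and>
        (\<forall>i. Suc i < length ts \<longrightarrow> ts ! i < ts ! Suc i) \<and>
        (\<forall>i<length vs. \<gamma> (ts ! i) = vs ! i) \<and>
        \<comment> \<open>(1) finitely many nondegenerate straight segments ...\<close>
        (\<forall>i. Suc i < length vs \<longrightarrow> vs ! i \<noteq> vs ! Suc i \<and>
           (\<forall>t\<in>{ts ! i .. ts ! Suc i}.
              \<gamma> t = vs ! i + ((t - ts ! i) / (ts ! Suc i - ts ! i)) *\<^sub>R (vs ! Suc i - vs ! i))) \<and>
        \<comment> \<open>... meeting at the boundary of the box or at the circle\<close>
        (\<forall>i. 0 < i \<and> Suc i < length vs \<longrightarrow>
           vs ! i \<in> frontier Gbox \<union> sphere (disk_center L) r) \<and>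
        \<comment> \<open>(2) specular reflection at meeting points on the box boundary\<close>
        (\<forall>i k. 0 < i \<and> Suc i < length vs \<and> k \<in> {1..b} \<and> vs ! i \<in> Arc k \<longrightarrow>
           specular (vs ! i - c k) (vs ! i - vs ! (i - 1)) (vs ! Suc i - vs ! i)) \<and>
        \<comment> \<open>(5) nowhere tangent to the circle\<close>
        (\<forall>i. Suc i < length vs \<longrightarrow>
           (\<forall>z\<in>closed_segment (vs ! i) (vs ! Suc i). z \<in> sphere (disk_center L) r \<longrightarrow>
              (vs ! Suc i - vs ! i) \<bullet> (z - disk_center L) \<noteq> 0))) \<and>
     \<comment> \<open>(3) only the endpoints may lie on the openings\<close>
     (\<forall>t\<in>{0<..<1}. \<gamma> t \<notin> left_opening a \<union> right_opening L a) \<and>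
     \<comment> \<open>(4) never meets a corner\<close>
     (\<forall>t\<in>{0..1}. \<gamma> t \<notin> corners L a b Arc)"

text \<open>Admissible path of the N-cell system (cell l translated by (l-1)L): a continuous path
  on [0,1] split at ss into finitely many pieces, piece i lying (after translating back) as an
  admissible path in cell ls!i, consecutive pieces in different cells, joined at internal openings.\<close>
definition system_admissible ::
  "real \<Rightarrow> real \<Rightarrow> real \<Rightarrow> nat \<Rightarrow> (nat \<Rightarrow> complex) \<Rightarrow> (nat \<Rightarrow> complex set) \<Rightarrow> complex set
    \<Rightarrow> nat \<Rightarrow> (real \<Rightarrow> complex) \<Rightarrow> bool" where
  "system_admissible L a r b c Arc Gbox N \<gamma> \<longleftrightarrow>
     continuous_on {0..1} \<gamma> \<and>
     (\<exists>ss ls.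
        length ss \<ge> 2 \<and> length ls = length ss - 1 \<and>
        ss ! 0 = 0 \<and> ss ! (length ss - 1) = 1 \<and>
        (\<forall>i. Suc i < length ss \<longrightarrow> ss ! i < ss ! Suc i) \<and>
        (\<forall>i<length ls. ls ! i \<in> {1..N} \<and>
           cell_admissible L a r b c Arc Gbox
             (\<lambda>t. \<gamma> (ss ! i + t * (ss ! Suc i - ss ! i))
                    - complex_of_real (real (ls ! i - 1) * L))) \<and>
        (\<forall>i. 0 < i \<and> i < length ls \<longrightarrow>
           ls ! (i - 1) \<noteq> ls ! i \<and>
           (\<exists>l\<in>{1..<N}. \<gamma> (ss ! i) \<in> shift (real l * L) (left_opening a))))"

end

theory Submission
  imports Defs
begin

fun pl :: "complex list \<Rightarrow> real \<Rightarrow> complex" where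
  "pl [] s = 0"
| "pl [v] s = v"
| "pl (v # w # rest) s = (if s \<le> 1 then v + s *\<^sub>R (w - v) else pl (w # rest) (s - 1))"

definition polyline :: "complex list \<Rightarrow> real \<Rightarrow> complex" where
  "polyline xs t = pl xs (real (length xs - 1) * t)"

lemma pl_seg: "Suc i < length xs \<Longrightarrow> real i \<le> s \<Longrightarrow> s \<le> real i + 1 \<Longrightarrow>
   pl xs s = xs ! i + (s - real i) *\<^sub>R (xs ! Suc i - xs ! i)"
proof (induction xs s arbitrary: i rule: pl.induct)
  case (3 v w rest s)
  show ?case
  proof (cases i)
    case 0 then show ?thesis using 3 by simp
  next
    case (Suc i')
    show ?thesis
    proof (cases "s \<le> 1")
      case True
      then have "s = 1" "i = 1" using 3 Suc by auto
      then show ?thesis by simp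
    next
      case False
      have "pl (w # rest) (s - 1) = (w # rest) ! i' + (s - 1 - real i') *\<^sub>R ((w # rest) ! Suc i' - (w # rest) ! i')"
        using 3 Suc False by auto
      then show ?thesis using False Suc by (simp add: algebra_simps)
    qed
  qed
qed auto

lemma pl_0: "xs \<noteq> [] \<Longrightarrow> pl xs 0 = hd xs"
proof (cases xs)
  case (Cons v rest) then show ?thesis by (cases rest) auto
qed simp

lemma pl_last: "xs \<noteq> [] \<Longrightarrow> pl xs (real (length xs - 1)) = last xs"
proof (induction xs "real (length xs - 1)" rule: pl.induct)
  case (3 v w rest)
  show ?case
  proof (cases rest)
    case Nil then show ?thesis by simp
  next
    case (Cons x xs)
    then have "pl (v # w # rest) (real (length (v # w # rest) - 1)) = pl (w # rest) (real (length (w#rest) - 1))"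
      by simp
    with 3 show ?thesis by simp
  qed
qed auto

lemma pl_shift: "pl (map (\<lambda>z. z + d) xs) s = (if xs = [] then 0 else pl xs s + d)"
  by (induction xs s rule: pl.induct) (auto simp: algebra_simps)

lemma pl_append_left: "xs \<noteq> [] \<Longrightarrow> 0 \<le> s \<Longrightarrow> s \<le> real (length xs - 1) \<Longrightarrow> pl (xs @ ys) s = pl xs s"
proof (induction xs s rule: pl.induct)
  case (2 v s)
  then show ?case by (cases ys) auto
next
  case (3 v w rest s)
  then show ?case by auto
qed auto

lemma pl_append_right: "xs \<noteq> [] \<Longrightarrow> ys \<noteq> [] \<Longrightarrow> last xs = hd ys \<Longrightarrow> 0 \<le> s \<Longrightarrow>
   pl (xs @ tl ys) (real (length xs - 1) + s) = pl ys s"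
proof (induction xs arbitrary: s)
  case (Cons v xs)
  show ?case
  proof (cases xs)
    case Nil
    then show ?thesis using Cons by (cases ys) auto
  next
    case (Cons w rest)
    show ?thesis
    proof (cases "real (length (v # xs) - 1) + s \<le> 1")
      case True
      then have "real (length rest) + s \<le> 0" using Cons by simp
      then have "real (length rest) \<le> 0" "s = 0" using \<open>0 \<le> s\<close> of_nat_0_le_iff[of "length rest"] by linarith+
      then have "rest = []" "s = 0" by auto
      then show ?thesis using Cons \<open>last (v # xs) = hd ys\<close> \<open>ys \<noteq> []\<close>
        by (cases ys) (auto simp: pl_0)
    next
      case False
      have "pl (xs @ tl ys) (real (length xs - 1) + s) = pl ys s"
        using \<open>xs = w # rest\<close> Cons.prems by (intro Cons.IH) auto
      moreover have "real (length (v # xs) - 1) + s - 1 = real (length xs - 1) + s"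
        using \<open>xs = w # rest\<close> by simp
      ultimately show ?thesis using False \<open>xs = w # rest\<close> by simp
    qed
  qed
qed simp

lemma pl_cont: "continuous_on {0..real (length xs - 1)} (pl xs)"
proof (induction xs rule: induct_list012)
  case 1 then show ?case by simp
next
  case (2 v) then show ?case by simp
next
  case (3 v w rest)
  have c1: "continuous_on {0..1} (pl (v # w # rest))"
    by (rule continuous_on_eq[of _ "\<lambda>s. v + s *\<^sub>R (w - v)"]) (auto intro!: continuous_intros)
  have c2: "continuous_on {1..real (length (v#w#rest) - 1)} (pl (v # w # rest))"
  proof (rule continuous_on_eq[of _ "\<lambda>s. pl (w # rest) (s - 1)"])
    show "continuous_on {1..real (length (v # w # rest) - 1)} (\<lambda>s. pl (w # rest) (s - 1))"
      apply (rule continuous_on_compose2[OF 3(2)])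
      by (auto intro!: continuous_intros)
    show "\<And>x. x \<in> {1..real (length (v # w # rest) - 1)} \<Longrightarrow> pl (w # rest) (x - 1) = pl (v # w # rest) x"
      by (auto simp: pl_0)
  qed
  have "{0..real (length (v#w#rest) - 1)} = {0..1} \<union> {1..real (length (v#w#rest) - 1)}"
    by auto
  then show ?case using continuous_on_closed_Un[OF closed_atLeastAtMost closed_atLeastAtMost c1 c2] by simp
qed

lemma pl_in_seg: "length xs \<ge> 2 \<Longrightarrow> 0 \<le> s \<Longrightarrow> s \<le> real (length xs - 1) \<Longrightarrow>
   \<exists>i. Suc i < length xs \<and> real i \<le> s \<and> s \<le> real i + 1"
proof -
  assume h: "length xs \<ge> 2" "0 \<le> s" "s \<le> real (length xs - 1)"
  define i where "i = min (length xs - 2) (nat \<lfloor>s\<rfloor>)"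
  have "real (nat \<lfloor>s\<rfloor>) \<le> s" using h by linarith
  moreover have "s < real (nat \<lfloor>s\<rfloor>) + 1" using h by linarith
  moreover have "length xs - 2 \<le> nat \<lfloor>s\<rfloor> \<Longrightarrow> real (length xs - 2) \<le> s"
    using \<open>real (nat \<lfloor>s\<rfloor>) \<le> s\<close> by (meson of_nat_le_iff order_trans)
  ultimately show ?thesis using h
    by (intro exI[of _ i]) (auto simp: i_def min_def of_nat_diff)
qed

locale cellctx =
  fixes L a r :: real and b :: nat and c :: "nat \<Rightarrow> complex" and rho :: "nat \<Rightarrow> real"
    and Arc :: "nat \<Rightarrow> complex set" and Gbox :: "complex set"
  assumes geom: "cell_geometry L a r b c rho Arc Gbox"
begin

abbreviation "ctr \<equiv> disk_center L"
abbreviation "Sph \<equiv> sphere ctr r"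
abbreviation "Fr \<equiv> frontier Gbox"
abbreviation "Ops \<equiv> left_opening a \<union> right_opening L a"
abbreviation "Crn \<equiv> corners L a b Arc"

definition seg_ok :: "complex \<Rightarrow> complex \<Rightarrow> bool" where
  "seg_ok u v \<longleftrightarrow> u \<noteq> v \<and> closed_segment u v \<subseteq> cell L r Gbox \<and>
     (\<forall>z\<in>closed_segment u v. z \<notin> Crn) \<and> (\<forall>z\<in>open_segment u v. z \<notin> Ops) \<and>
     (\<forall>z\<in>closed_segment u v. z \<in> Sph \<longrightarrow> (v - u) \<bullet> (z - ctr) \<noteq> 0)"

definition vert_ok :: "complex \<Rightarrow> complex \<Rightarrow> complex \<Rightarrow> bool" where
  "vert_ok u v w \<longleftrightarrow> v \<in> Fr \<union> Sph \<and> v \<notin> Ops \<and>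
     (\<forall>k. k \<in> {1..b} \<and> v \<in> Arc k \<longrightarrow> specular (v - c k) (v - u) (w - v))"

fun good :: "complex list \<Rightarrow> bool" where
  "good [] = False"
| "good [u] = False"
| "good [u, v] = seg_ok u v"
| "good (u # v # w # rest) = (seg_ok u v \<and> vert_ok u v w \<and> good (v # w # rest))"

lemma good_idx: "good xs \<Longrightarrow> 2 \<le> length xs \<and> (\<forall>i. Suc i < length xs \<longrightarrow> seg_ok (xs!i) (xs!Suc i)) \<and>
   (\<forall>i. 0 < i \<and> Suc i < length xs \<longrightarrow> vert_ok (xs!(i-1)) (xs!i) (xs!Suc i))"
proof (induction xs rule: good.induct)
  case (4 u v w rest)
  then have IH: "2 \<le> length (v # w # rest) \<and> (\<forall>i. Suc i < length (v # w # rest) \<longrightarrow> seg_ok ((v # w # rest)!i) ((v # w # rest)!Suc i)) \<and>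
   (\<forall>i. 0 < i \<and> Suc i < length (v # w # rest) \<longrightarrow> vert_ok ((v # w # rest)!(i-1)) ((v # w # rest)!i) ((v # w # rest)!Suc i))"
    and h: "seg_ok u v" "vert_ok u v w" by auto
  have A: "seg_ok ((u # v # w # rest)!i) ((u # v # w # rest)!Suc i)" if "Suc i < length (u # v # w # rest)" for i
  proof (cases i)
    case 0 then show ?thesis using h by simp
  next
    case (Suc j) then show ?thesis using IH that by auto
  qed
  have B: "vert_ok ((u # v # w # rest)!(i-1)) ((u # v # w # rest)!i) ((u # v # w # rest)!Suc i)"
    if "0 < i" "Suc i < length (u # v # w # rest)" for i
  proof (cases i)
    case 0 then show ?thesis using that by simp
  next
    case (Suc j)
    show ?thesis
    proof (cases j)
      case 0 then show ?thesis using h Suc by simp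
    next
      case (Suc l)
      have "vert_ok ((v # w # rest)!(j-1)) ((v # w # rest)!j) ((v # w # rest)!Suc j)"
        using IH that \<open>i = Suc j\<close> Suc by auto
      then show ?thesis using \<open>i = Suc j\<close> Suc by simp
    qed
  qed
  show ?case using A B by auto
qed auto

lemma good_cell_adm:
  assumes g: "good xs" and f: "\<forall>t\<in>{0..1}. f t = polyline xs t"
  shows "cell_admissible L a r b c Arc Gbox f"
proof -
  note gi = good_idx[OF g]
  define n where "n = length xs"
  define m where "m = n - 1"
  have n2: "n \<ge> 2" using gi n_def by auto
  have m1: "m \<ge> 1" "real m = real n - 1" using n2 m_def by auto
  define ts where "ts = map (\<lambda>i. real i / real m) [0..<n]"
  have tsi: "ts ! i = real i / real m" if "i < n" for i using that ts_def by simp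
  have fpl: "f t = pl xs (real m * t)" if "t \<in> {0..1}" for t
    using f that by (simp add: polyline_def m_def n_def)
  have seg_in: "pl xs s \<in> closed_segment (xs!i) (xs!Suc i)"
    if "Suc i < n" "real i \<le> s" "s \<le> real i + 1" for i s
  proof -
    have "pl xs s = (1 - (s - real i)) *\<^sub>R xs!i + (s - real i) *\<^sub>R xs!Suc i"
      using pl_seg[of i xs s] that n_def by (simp add: algebra_simps)
    then show ?thesis unfolding closed_segment_def using that by force
  qed
  have locate: "\<exists>i. Suc i < n \<and> real i \<le> real m * t \<and> real m * t \<le> real i + 1" if "t \<in> {0..1}" for t
    using pl_in_seg[of xs "real m * t"] that n2 m1 by (auto simp: n_def m_def)
  have c1: "\<forall>t\<in>{0..1}. f t \<in> cell L r Gbox"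
  proof
    fix t :: real assume t: "t \<in> {0..1}"
    obtain i where i: "Suc i < n" "real i \<le> real m * t" "real m * t \<le> real i + 1" using locate[OF t] by blast
    have "seg_ok (xs!i) (xs!Suc i)" using gi i n_def by auto
    then show "f t \<in> cell L r Gbox" using seg_in[OF i] fpl[OF t] unfolding seg_ok_def by auto
  qed
  have c4: "\<forall>t\<in>{0..1}. f t \<notin> Crn"
  proof
    fix t :: real assume t: "t \<in> {0..1}"
    obtain i where i: "Suc i < n" "real i \<le> real m * t" "real m * t \<le> real i + 1" using locate[OF t] by blast
    have "seg_ok (xs!i) (xs!Suc i)" using gi i n_def by auto
    then show "f t \<notin> Crn" using seg_in[OF i] fpl[OF t] unfolding seg_ok_def by auto
  qed
  have c3: "\<forall>t\<in>{0<..<1}. f t \<notin> Ops"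
  proof
    fix t :: real assume t: "t \<in> {0<..<1}"
    then have t': "t \<in> {0..1}" by auto
    obtain i where i: "Suc i < n" "real i \<le> real m * t" "real m * t \<le> real i + 1" using locate[OF t'] by blast
    have s0: "0 < real m * t" "real m * t < real m" using t m1 by auto
    have so: "seg_ok (xs!i) (xs!Suc i)" using gi i n_def by auto
    show "f t \<notin> Ops"
    proof (cases "real m * t = real i")
      case True
      then have "0 < i" using s0 by auto
      then have "vert_ok (xs!(i-1)) (xs!i) (xs!Suc i)" using gi i n_def by auto
      moreover have "pl xs (real m * t) = xs ! i" using pl_seg[of i xs "real m * t"] i True n_def by simp
      ultimately show ?thesis using fpl[OF t'] unfolding vert_ok_def by auto
    next
      case False
      show ?thesis
      proof (cases "real m * t = real i + 1")
        case True
        then have "Suc (Suc i) < n" using s0 m1 by (simp add: m_def)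
        then have "vert_ok (xs!(Suc i-1)) (xs!Suc i) (xs!Suc (Suc i))" using gi n_def by auto
        moreover have "pl xs (real m * t) = xs ! Suc i" using pl_seg[of i xs "real m * t"] i True n_def by simp
        ultimately show ?thesis using fpl[OF t'] unfolding vert_ok_def by auto
      next
        case False2: False
        define u where "u = real m * t - real i"
        have u: "0 < u" "u < 1" using False False2 i u_def by auto
        have "pl xs (real m * t) = xs!i + u *\<^sub>R (xs!Suc i - xs!i)"
          using pl_seg[of i xs "real m * t"] i n_def u_def by simp
        also have "\<dots> = (1 - u) *\<^sub>R xs!i + u *\<^sub>R xs!Suc i" by (simp add: algebra_simps)
        finally have "pl xs (real m * t) = (1 - u) *\<^sub>R xs!i + u *\<^sub>R xs!Suc i" .
        then have "f t \<in> open_segment (xs!i) (xs!Suc i)"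
          using u so fpl[OF t'] unfolding in_segment(2) seg_ok_def by auto
        then show ?thesis using so unfolding seg_ok_def by auto
      qed
    qed
  qed
  have ts0: "ts ! 0 = 0" using tsi[of 0] n2 by simp
  have lts: "length ts = length xs" using ts_def n_def by simp
  have ts_last: "ts ! (length ts - 1) = 1" using tsi[of "n-1"] n2 m1 ts_def by (simp add: m_def)
  have ts_inc: "\<forall>i. Suc i < length ts \<longrightarrow> ts ! i < ts ! Suc i"
    using tsi m1 ts_def by (auto simp: divide_strict_right_mono)
  have ts_v: "\<forall>i<length xs. f (ts ! i) = xs ! i"
  proof (intro allI impI)
    fix i assume i: "i < length xs"
    have t: "ts ! i \<in> {0..1}" using tsi[of i] i n_def m_def m1 by auto
    have e: "real m * (ts ! i) = real i" using tsi[of i] i n_def m1 by simp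
    show "f (ts ! i) = xs ! i"
    proof (cases "Suc i < n")
      case True then show ?thesis using fpl[OF t] e pl_seg[of i xs "real i"] n_def by simp
    next
      case False
      then have "i = n - 1" using i n_def by simp
      moreover have "xs \<noteq> []" using n2 n_def by auto
      ultimately show ?thesis using fpl[OF t] e pl_last[of xs] n_def last_conv_nth[of xs] by auto
    qed
  qed
  have segf: "\<forall>i. Suc i < length xs \<longrightarrow> xs ! i \<noteq> xs ! Suc i \<and>
           (\<forall>t\<in>{ts ! i .. ts ! Suc i}.
              f t = xs ! i + ((t - ts ! i) / (ts ! Suc i - ts ! i)) *\<^sub>R (xs ! Suc i - xs ! i))"
  proof (intro allI impI conjI ballI)
    fix i assume i: "Suc i < length xs"
    then show "xs ! i \<noteq> xs ! Suc i" using gi unfolding seg_ok_def by auto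
    fix t assume t: "t \<in> {ts ! i .. ts ! Suc i}"
    have ti: "ts ! i = real i / real m" "ts ! Suc i = real (Suc i) / real m" using tsi i n_def by auto
    have "real m * (ts!i) \<le> real m * t" "real m * t \<le> real m * (ts ! Suc i)" using t by (auto intro!: mult_left_mono)
    then have mt: "real i \<le> real m * t" "real m * t \<le> real i + 1" using ti m1 by auto
    have "real i + 1 \<le> real m" using i n_def m_def by auto
    then have "real m * t \<le> real m * 1" using mt by linarith
    moreover have "real m * 0 \<le> real m * t" using mt by simp
    moreover have "real m > 0" using m1 by simp
    ultimately have t01: "t \<in> {0..1}" by (auto simp: mult_le_cancel_left zero_le_mult_iff)
    have d: "ts ! Suc i - ts ! i = 1 / real m" using ti by (simp add: diff_divide_distrib[symmetric])
    have q: "(t - ts ! i) / (ts ! Suc i - ts ! i) = real m * t - real i"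
      unfolding d using ti(1) \<open>real m > 0\<close> by (simp add: field_simps)
    show "f t = xs ! i + ((t - ts ! i) / (ts ! Suc i - ts ! i)) *\<^sub>R (xs ! Suc i - xs ! i)"
      using fpl[OF t01] pl_seg[of i xs "real m * t"] i mt q by simp
  qed
  have vf: "\<forall>i. 0 < i \<and> Suc i < length xs \<longrightarrow> xs ! i \<in> Fr \<union> Sph"
    using gi unfolding vert_ok_def by auto
  have sp: "\<forall>i k. 0 < i \<and> Suc i < length xs \<and> k \<in> {1..b} \<and> xs ! i \<in> Arc k \<longrightarrow>
           specular (xs ! i - c k) (xs ! i - xs ! (i - 1)) (xs ! Suc i - xs ! i)"
    using gi unfolding vert_ok_def by blast
  have tg: "\<forall>i. Suc i < length xs \<longrightarrow>
           (\<forall>z\<in>closed_segment (xs ! i) (xs ! Suc i). z \<in> Sph \<longrightarrow>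
              (xs ! Suc i - xs ! i) \<bullet> (z - ctr) \<noteq> 0)"
    using gi unfolding seg_ok_def by blast
  show ?thesis unfolding cell_admissible_def
    apply (intro conjI c1 c3 c4)
    apply (rule exI[of _ xs], rule exI[of _ ts])
    using n2 ts0 lts ts_last ts_inc ts_v segf vf sp tg n_def by auto
qed

lemma g1: "L > 0"
  using geom unfolding cell_geometry_def by (elim conjE) assumption

lemma g2: "a > 0"
  using geom unfolding cell_geometry_def by (elim conjE) assumption

lemma g3: "r > 0"
  using geom unfolding cell_geometry_def by (elim conjE) assumption

lemma g4: "closed Gbox"
  using geom unfolding cell_geometry_def by (elim conjE) assumption

lemma g5: "bounded Gbox"
  using geom unfolding cell_geometry_def by (elim conjE) assumption

lemma g6: "cball ctr r \<subseteq> interior Gbox"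
  using geom unfolding cell_geometry_def by (elim conjE) assumption

lemma g7: "Fr = left_opening a \<union> right_opening L a \<union> (\<Union>k\<in>{1..b}. Arc k)"
  using geom unfolding cell_geometry_def by (elim conjE) assumption

lemma g8: "\<forall>z\<in>Gbox. 0 \<le> Re z \<and> Re z \<le> L"
  using geom unfolding cell_geometry_def by (elim conjE) assumption

lemma g9: "\<forall>z\<in>Fr. closed_segment ctr z \<inter> Fr = {z}"
  using geom unfolding cell_geometry_def by (elim conjE) assumption

lemmas gf = g1 g2 g3 g4 g5 g6 g7 g8 g9

lemma arcf: assumes "k \<in> {1..b}"
  shows "rho k > 0" "\<exists>\<alpha> \<beta>. \<alpha> < \<beta> \<and> \<beta> < \<alpha> + 2 * pi \<and>
           Arc k = (\<lambda>t. c k + complex_of_real (rho k) * cis t) ` {\<alpha>..\<beta>}"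
    "\<exists>e>0. \<forall>z\<in>Gbox. (\<exists>w\<in>Arc k. dist z w < e) \<longrightarrow> rho k \<le> dist z (c k)"
  using geom assms unfolding cell_geometry_def by auto

lemma Fr_sub: "Fr \<subseteq> Gbox"
  using gf(4) by (simp add: frontier_subset_closed)

lemma cball_Fr: "cball ctr r \<inter> Fr = {}"
  using gf(6) by (auto simp: frontier_def)

lemma Sph_Fr: "z \<in> Sph \<Longrightarrow> z \<notin> Fr"
  using cball_Fr by auto

lemma Ops_Fr: "Ops \<subseteq> Fr" using gf(7) by auto

lemma Arc_Fr: "k \<in> {1..b} \<Longrightarrow> Arc k \<subseteq> Fr" using gf(7) by auto

lemma Arc_sph: assumes "k \<in> {1..b}" "p \<in> Arc k" shows "dist p (c k) = rho k"
proof -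
  obtain \<alpha> \<beta> where "Arc k = (\<lambda>t. c k + complex_of_real (rho k) * cis t) ` {\<alpha>..\<beta>}"
    using arcf(2)[OF assms(1)] by blast
  then obtain t where "p = c k + complex_of_real (rho k) * cis t" using assms by auto
  then show ?thesis using arcf(1)[OF assms(1)] by (simp add: dist_norm norm_mult)
qed

lemma good_append: "good xs \<Longrightarrow> good ys \<Longrightarrow> last xs = hd ys \<Longrightarrow> hd ys \<in> Sph \<Longrightarrow> good (xs @ tl ys)"
proof (induction xs rule: good.induct)
  case (3 u v)
  obtain w rest where ys: "ys = v # w # rest" using 3
    by (metis good.simps(1,2) last.simps last_ConsL list.collapse list.sel(1))
  have "vert_ok u v w" unfolding vert_ok_def
    using 3 ys Sph_Fr Ops_Fr Arc_Fr by auto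
  then show ?case using 3 ys by simp
next
  case (4 u v w rest)
  then show ?case by simp
qed auto

lemma seg_ok_sym: "seg_ok u v \<Longrightarrow> seg_ok v u"
  unfolding seg_ok_def
  by (auto simp: closed_segment_commute open_segment_commute inner_diff_left)

lemma specular_sym: "specular n u w \<Longrightarrow> specular n (- w) (- u)"
proof -
  assume "specular n u w"
  then obtain s where s: "s > 0" "w = s *\<^sub>R (u - (2 * (u \<bullet> n) / (n \<bullet> n)) *\<^sub>R n)"
    unfolding specular_def by blast
  define q where "q = 2 * (u \<bullet> n) / (n \<bullet> n)"
  have w': "w = s *\<^sub>R (u - q *\<^sub>R n)" using s q_def by simp
  have wn: "w \<bullet> n = s * (u \<bullet> n - q * (n \<bullet> n))" unfolding w' by (simp add: inner_diff_left inner_scaleR_left)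
  show ?thesis
  proof (cases "n = 0")
    case True
    then have "w = s *\<^sub>R u" using s by simp
    then have "- u = (1/s) *\<^sub>R (- w - (2 * ((- w) \<bullet> n) / (n \<bullet> n)) *\<^sub>R n)" using s True by simp
    then show ?thesis unfolding specular_def using s by (intro exI[of _ "1/s"]) auto
  next
    case False
    then have nn: "n \<bullet> n \<noteq> 0" by simp
    have "q * (n \<bullet> n) = 2 * (u \<bullet> n)" using nn q_def by simp
    then have "w \<bullet> n = - s * (u \<bullet> n)" using wn by (simp add: algebra_simps)
    then have e1: "2 * ((- w) \<bullet> n) / (n \<bullet> n) = s * q" using q_def by simp
    have "- w - (s * q) *\<^sub>R n = - s *\<^sub>R u" unfolding w' by (simp add: algebra_simps)
    then have "- w - (2 * ((- w) \<bullet> n) / (n \<bullet> n)) *\<^sub>R n = - s *\<^sub>R u" using e1 by simp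
    then have "- u = (1/s) *\<^sub>R (- w - (2 * ((- w) \<bullet> n) / (n \<bullet> n)) *\<^sub>R n)" using s by simp
    then show ?thesis unfolding specular_def using s by (intro exI[of _ "1/s"]) auto
  qed
qed

end

lemma sq_exp: "(norm (x + t *\<^sub>R d - (q0::complex)))\<^sup>2 = (norm (x - q0))\<^sup>2 + 2 * t * (d \<bullet> (x - q0)) + t\<^sup>2 * (norm d)\<^sup>2"
proof -
  have "x + t *\<^sub>R d - q0 = (x - q0) + t *\<^sub>R d" by simp
  then show ?thesis
    by (simp only: power2_norm_eq_inner inner_add_left inner_add_right inner_scaleR_left inner_scaleR_right inner_commute[of d "x - q0"])
       (simp add: power2_eq_square algebra_simps)
qed

lemma exit_ball: "norm (x - q0) = R \<Longrightarrow> d \<bullet> (x - q0) > 0 \<Longrightarrow> t > 0 \<Longrightarrow> norm (x + t *\<^sub>R d - (q0::complex)) > R"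
proof -
  assume h: "norm (x - q0) = R" "d \<bullet> (x - q0) > 0" "t > 0"
  have "(norm (x + t *\<^sub>R d - q0))\<^sup>2 > R\<^sup>2"
    unfolding sq_exp using h by (simp add: add_pos_nonneg)
  moreover have "R \<ge> 0" using h(1) by auto
  ultimately show ?thesis using power2_less_imp_less norm_ge_zero by blast
qed

lemma enter_ball: "d \<bullet> (x - q0) < 0 \<Longrightarrow> \<exists>t. 0 < t \<and> t < 1 \<and> norm (x + t *\<^sub>R d - (q0::complex)) < norm (x - q0)"
proof -
  assume h: "d \<bullet> (x - q0) < 0"
  define D where "D = d \<bullet> (x - q0)"
  have d0: "d \<noteq> 0" using h by auto
  then have nd: "(norm d)\<^sup>2 > 0" by simp
  define t where "t = min (1/2) (- D / (norm d)\<^sup>2)"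
  have "- D / (norm d)\<^sup>2 > 0" using h nd D_def by (intro divide_pos_pos) auto
  then have t: "0 < t" "t < 1" "t \<le> - D / (norm d)\<^sup>2" by (auto simp: t_def)
  have "t * (norm d)\<^sup>2 \<le> - D" using t(3) nd by (simp add: field_simps)
  then have "t\<^sup>2 * (norm d)\<^sup>2 \<le> t * (- D)" using t(1)
    by (metis mult.assoc mult_left_mono less_le power2_eq_square)
  moreover have tD: "t * D < 0" using t(1) h D_def by (simp add: mult_pos_neg)
  moreover have "(norm (x + t *\<^sub>R d - q0))\<^sup>2 = (norm (x - q0))\<^sup>2 + 2 * t * D + t\<^sup>2 * (norm d)\<^sup>2"
    using sq_exp D_def by simp
  ultimately have "(norm (x + t *\<^sub>R d - q0))\<^sup>2 < (norm (x - q0))\<^sup>2" by linarith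
  then have "norm (x + t *\<^sub>R d - q0) < norm (x - q0)"
    using power2_less_imp_less norm_ge_zero by blast
  then show ?thesis using t by blast
qed

context cellctx begin

lemma L_int: assumes z: "z \<in> interior Gbox" and o: "open_segment z q \<inter> Fr = {}"
  shows "open_segment z q \<subseteq> interior Gbox"
proof (rule ccontr)
  assume nsub: "\<not> open_segment z q \<subseteq> interior Gbox"
  then have zq: "z \<noteq> q" by auto
  obtain e where e: "e > 0" "ball z e \<subseteq> interior Gbox"
    using z open_interior open_contains_ball by blast
  define t where "t = min (1/2) (e / (2 * norm (q - z)))"
  have nq: "norm (q - z) > 0" using zq by simp
  have t: "0 < t" "t < 1" using e nq by (auto simp: t_def)
  define w where "w = z + t *\<^sub>R (q - z)"
  have "w = (1 - t) *\<^sub>R z + t *\<^sub>R q" by (simp add: w_def algebra_simps)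
  then have wo: "w \<in> open_segment z q" using t zq unfolding in_segment(2) by blast
  have "dist z w = t * norm (q - z)" using t(1) by (simp add: w_def dist_norm)
  also have "\<dots> \<le> (e / (2 * norm (q - z))) * norm (q - z)" using nq by (intro mult_right_mono) (auto simp: t_def)
  also have "\<dots> < e" using nq e by simp
  finally have "w \<in> interior Gbox" using e by auto
  then have "open_segment z q \<inter> interior Gbox \<noteq> {}" using wo by auto
  moreover have "open_segment z q - interior Gbox \<noteq> {}" using nsub by auto
  ultimately have "open_segment z q \<inter> frontier (interior Gbox) \<noteq> {}"
    using connected_Int_frontier[of "open_segment z q" "interior Gbox"] convex_connected convex_open_segment by blast
  then show False using o frontier_interior_subset by blast
qed

lemma Sph_int: "z \<in> Sph \<Longrightarrow> z \<in> interior Gbox" using gf(6) by auto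

lemma RV:
  assumes k: "k \<in> {1..b}" and rv: "returns_via L a r b c Arc Gbox k \<eta>"
  shows "\<exists>p lam. p \<in> Arc k \<and> p \<notin> Crn \<and> lam > 0 \<and> \<eta> - c k = (1 + lam) *\<^sub>R (p - c k) \<and>
     open_segment \<eta> p \<inter> (Fr \<union> cball ctr r) = {} \<and> (p - \<eta>) \<bullet> (\<eta> - ctr) \<ge> 0"
proof -
  have eS: "\<eta> \<in> Sph" using rv unfolding returns_via_def by auto
  obtain p where p: "p \<in> Arc k" "p \<notin> Crn" "p \<noteq> \<eta>"
     "open_segment \<eta> p \<inter> (Fr \<union> cball ctr r) = {}"
     "specular (p - c k) (p - \<eta>) (\<eta> - p)"
    using rv unfolding returns_via_def by blast
  define u where "u = p - \<eta>"
  define n where "n = p - c k"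
  have u0: "u \<noteq> 0" using p(3) u_def by auto
  have nr: "norm n = rho k" using Arc_sph[OF k p(1)] n_def by (simp add: dist_norm)
  have rk: "rho k > 0" using arcf(1)[OF k] .
  obtain s where s: "s > 0" "- u = s *\<^sub>R (u - (2 * (u \<bullet> n) / (n \<bullet> n)) *\<^sub>R n)"
    using p(5) unfolding specular_def u_def n_def by (auto simp: minus_diff_eq)
  define \<kappa> where "\<kappa> = 2 * (u \<bullet> n) / (n \<bullet> n)"
  define \<mu> where "\<mu> = s * \<kappa> / (1 + s)"
  have e1: "(1 + s) *\<^sub>R u = (s * \<kappa>) *\<^sub>R n" using s(2) unfolding \<kappa>_def by (simp add: algebra_simps)
  have "u = (1/(1+s)) *\<^sub>R ((1 + s) *\<^sub>R u)" using s(1) by simp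
  also have "\<dots> = \<mu> *\<^sub>R n" unfolding e1 \<mu>_def by simp
  finally have un: "u = \<mu> *\<^sub>R n" .
  have "\<mu> \<noteq> 0" using un u0 by auto
  have int_seg: "open_segment \<eta> p \<subseteq> interior Gbox"
    using L_int[OF Sph_int[OF eS]] p(4) by blast
  have mneg: "\<mu> < 0"
  proof (rule ccontr)
    assume "\<not> \<mu> < 0"
    then have mpos: "\<mu> > 0" using \<open>\<mu> \<noteq> 0\<close> by auto
    obtain e where e: "e > 0" "\<forall>z\<in>Gbox. (\<exists>w\<in>Arc k. dist z w < e) \<longrightarrow> rho k \<le> dist z (c k)"
      using arcf(3)[OF k] by blast
    define t where "t = min (1/2) (min (1 / (2 * \<mu>)) (e / (2 * \<mu> * rho k)))"
    have t: "0 < t" "t < 1" "t * \<mu> \<le> 1/2" "t * \<mu> * rho k < e"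
    proof -
      show "0 < t" "t < 1" using mpos e rk by (auto simp: t_def)
      have "t \<le> 1 / (2 * \<mu>)" by (simp add: t_def)
      then show "t * \<mu> \<le> 1/2" using mpos by (simp add: field_simps)
      have "t \<le> e / (2 * \<mu> * rho k)" by (simp add: t_def)
      then have "t * (\<mu> * rho k) \<le> e / 2" using mpos rk by (simp add: field_simps)
      then show "t * \<mu> * rho k < e" using e by (simp add: mult.assoc)
    qed
    define z where "z = p + t *\<^sub>R (\<eta> - p)"
    have "z = (1 - t) *\<^sub>R p + t *\<^sub>R \<eta>" by (simp add: z_def algebra_simps)
    then have "z \<in> open_segment p \<eta>" using t p(3) unfolding in_segment(2) by auto
    then have zG: "z \<in> Gbox" using int_seg interior_subset open_segment_commute by blast
    have "z - p = - (t *\<^sub>R (p - \<eta>))" by (simp add: z_def algebra_simps)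
    then have zp: "z - p = - (t * \<mu>) *\<^sub>R n" using un u_def by simp
    have "dist z p = t * \<mu> * rho k" using zp nr mpos t by (simp add: dist_norm)
    then have "dist z p < e" using t(4) by simp
    then have "rho k \<le> dist z (c k)" using e(2) zG p(1) by blast
    moreover have "z - c k = (1 - t * \<mu>) *\<^sub>R n" using zp by (simp add: n_def algebra_simps)
    then have "dist z (c k) = (1 - t * \<mu>) * rho k" using nr t by (simp add: dist_norm)
    moreover have "t * \<mu> > 0" using t mpos by simp
    ultimately show False using rk by (simp add: mult_le_cancel_right1)
  qed
  have eq: "\<eta> - c k = (1 + - \<mu>) *\<^sub>R (p - c k)"
    using un by (simp add: u_def n_def algebra_simps)
  have nonneg: "(p - \<eta>) \<bullet> (\<eta> - ctr) \<ge> 0"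
  proof (rule ccontr)
    assume "\<not> 0 \<le> (p - \<eta>) \<bullet> (\<eta> - ctr)"
    then obtain t where t: "0 < t" "t < 1" "norm (\<eta> + t *\<^sub>R (p - \<eta>) - ctr) < norm (\<eta> - ctr)"
      using enter_ball[of "p - \<eta>" \<eta> ctr] by auto
    have "\<eta> + t *\<^sub>R (p - \<eta>) = (1 - t) *\<^sub>R \<eta> + t *\<^sub>R p" by (simp add: algebra_simps)
    then have "\<eta> + t *\<^sub>R (p - \<eta>) \<in> open_segment \<eta> p" using t p(3) unfolding in_segment(2) by auto
    moreover have "\<eta> + t *\<^sub>R (p - \<eta>) \<in> cball ctr r" using t(3) eS by (simp add: dist_norm norm_minus_commute)
    ultimately show False using p(4) by blast
  qed
  show ?thesis using p mneg eq nonneg by (intro exI[of _ p] exI[of _ "- \<mu>"]) auto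
qed

end

lemma cis_dist_sq: "(cmod (cis x - cis y))\<^sup>2 = 2 - 2 * cos (x - y)"
proof -
  have "(cmod (cis x - cis y))\<^sup>2 = (cos x - cos y)\<^sup>2 + (sin x - sin y)\<^sup>2"
    by (simp add: cmod_power2)
  also have "\<dots> = (sin x)\<^sup>2 + (cos x)\<^sup>2 + ((sin y)\<^sup>2 + (cos y)\<^sup>2) - 2 * (cos x * cos y + sin x * sin y)"
    by (simp add: power2_eq_square algebra_simps)
  also have "\<dots> = 2 - 2 * cos (x - y)" by (simp add: cos_diff)
  finally show ?thesis .
qed

lemma cis_dist_le: "cmod (cis x - cis y) \<le> \<bar>x - y\<bar>"
proof -
  have "2 * ((x - y) / 2) = x - y" by simp
  then have "cos (x - y) = 1 - 2 * (sin ((x - y) / 2))\<^sup>2"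
    using cos_double_sin[of "(x - y)/2"] by metis
  then have "(cmod (cis x - cis y))\<^sup>2 = 4 * (sin ((x - y) / 2))\<^sup>2" using cis_dist_sq by simp
  also have "\<dots> \<le> 4 * ((x - y) / 2)\<^sup>2"
    using abs_sin_x_le_abs_x[of "(x - y)/2"] abs_le_square_iff[of "sin ((x - y) / 2)" "(x - y)/2"] by simp
  also have "\<dots> = \<bar>x - y\<bar>\<^sup>2" by (simp add: power2_eq_square field_simps)
  finally show ?thesis by (simp add: abs_le_square_iff[symmetric])
qed

lemma cos_far: assumes "0 < e" "e \<le> pi" "e \<le> \<bar>d\<bar>" "\<bar>d\<bar> \<le> 2 * pi - e" shows "cos d \<le> cos e"
proof -
  have "cos d = cos \<bar>d\<bar>" by (cases "d \<ge> 0") auto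
  moreover have "cos \<bar>d\<bar> \<le> cos e"
  proof (cases "\<bar>d\<bar> \<le> pi")
    case True then show ?thesis using assms by (intro cos_monotone_0_pi_le) auto
  next
    case False
    have "cos \<bar>d\<bar> = cos (2 * pi - \<bar>d\<bar>)" by simp
    also have "\<dots> \<le> cos e" using assms False by (intro cos_monotone_0_pi_le) auto
    finally show ?thesis .
  qed
  ultimately show ?thesis by simp
qed

lemma ivt0: fixes g :: "real \<Rightarrow> real"
  assumes "a \<le> b" "continuous_on {a..b} g" "g a * g b \<le> 0" shows "\<exists>t\<in>{a..b}. g t = 0"
proof (cases "g a \<le> 0")
  case True
  then have "0 \<le> g b \<or> g a = 0" using assms(3) by (auto simp: mult_le_0_iff)
  then show ?thesis
  proof
    assume "0 \<le> g b" then show ?thesis using IVT'[of g a 0 b] True assms by auto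
  next
    assume "g a = 0" then show ?thesis using assms by auto
  qed
next
  case False
  then have "g b \<le> 0" using assms(3) by (auto simp: mult_le_0_iff)
  then show ?thesis using IVT2'[of g b 0 a] False assms by auto
qed

lemma ivt0': fixes g :: "real \<Rightarrow> real"
  assumes "continuous_on {min a b..max a b} g" "g a * g b \<le> 0" shows "\<exists>t\<in>{min a b..max a b}. g t = 0"
proof (cases "a \<le> b")
  case True then show ?thesis using ivt0[of a b g] assms by auto
next
  case False then show ?thesis using ivt0[of b a g] assms by (auto simp: mult.commute)
qed

lemma bil_pert: fixes x0 y0 q0 :: complex
  assumes "(y0 - x0) \<bullet> (x0 - q0) > 0"
  shows "\<exists>d>0. \<forall>x y. dist x x0 < d \<longrightarrow> dist y y0 < d \<longrightarrow> (y - x) \<bullet> (x - q0) > 0"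
proof -
  define f0 where "f0 = (y0 - x0) \<bullet> (x0 - q0)"
  define K where "K = 2 * (norm (x0 - q0) + 1) + norm (y0 - x0) + 1"
  have K: "K > 0" by (simp add: K_def add_pos_nonneg)
  define d where "d = min 1 (f0 / (2 * K))"
  have d: "d > 0" "d \<le> 1" "d * K < f0" using K assms f0_def by (auto simp: d_def min_def field_simps)
  show ?thesis
  proof (intro exI[of _ d] conjI allI impI d(1))
    fix x y assume hx: "dist x x0 < d" and hy: "dist y y0 < d"
    have "(y - x) \<bullet> (x - q0) - f0 = ((y - y0) - (x - x0)) \<bullet> (x - q0) + (y0 - x0) \<bullet> (x - x0)"
      unfolding f0_def by (simp add: inner_diff_left inner_diff_right algebra_simps)
    also have "\<dots> \<ge> - (norm ((y - y0) - (x - x0)) * norm (x - q0)) - norm (y0 - x0) * norm (x - x0)"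
      using Cauchy_Schwarz_ineq2[of "(y - y0) - (x - x0)" "x - q0"] Cauchy_Schwarz_ineq2[of "y0 - x0" "x - x0"]
      by linarith
    finally have e: "(y - x) \<bullet> (x - q0) - f0 \<ge> - (norm ((y - y0) - (x - x0)) * norm (x - q0)) - norm (y0 - x0) * norm (x - x0)" .
    have n1: "norm ((y - y0) - (x - x0)) \<le> 2 * d"
      using norm_triangle_ineq4[of "y - y0" "x - x0"] hx hy by (simp add: dist_norm)
    have n2: "norm (x - q0) \<le> norm (x0 - q0) + 1"
      using norm_triangle_ineq[of "x - x0" "x0 - q0"] hx d by (simp add: dist_norm)
    have n3: "norm (x - x0) \<le> d" using hx by (simp add: dist_norm)
    have "norm ((y - y0) - (x - x0)) * norm (x - q0) \<le> (2 * d) * (norm (x0 - q0) + 1)"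
      using n1 n2 d by (intro mult_mono) auto
    moreover have "norm (y0 - x0) * norm (x - x0) \<le> norm (y0 - x0) * d"
      using n3 by (intro mult_left_mono) auto
    moreover have "(2 * d) * (norm (x0 - q0) + 1) + norm (y0 - x0) * d \<le> d * K"
      unfolding K_def using d by (simp add: algebra_simps)
    ultimately show "(y - x) \<bullet> (x - q0) > 0" using e d by linarith
  qed
qed

lemma unit_diff: fixes x y :: complex assumes "x \<noteq> 0" "y \<noteq> 0"
  shows "cmod (x / cmod x - y / cmod y) \<le> 2 * cmod (x - y) / cmod y"
proof -
  have "x / cmod x - y / cmod y = (x / cmod x - x / cmod y) + (x - y) / cmod y" by (simp add: diff_divide_distrib)
  then have "cmod (x / cmod x - y / cmod y) \<le> cmod (x / cmod x - x / cmod y) + cmod ((x - y) / cmod y)"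
    by (metis norm_triangle_ineq)
  moreover have "cmod (x / cmod x - x / cmod y) = \<bar>cmod y - cmod x\<bar> / cmod y"
  proof -
    have "x / cmod x - x / cmod y = x * complex_of_real ((cmod y - cmod x) / (cmod x * cmod y))"
      using assms by (simp add: field_simps)
    then have "cmod (x / cmod x - x / cmod y) = cmod x * \<bar>(cmod y - cmod x) / (cmod x * cmod y)\<bar>"
      by (simp only: norm_mult norm_of_real)
    also have "\<dots> = \<bar>cmod y - cmod x\<bar> / cmod y" using assms by (simp add: abs_divide abs_mult)
    finally show ?thesis .
  qed
  moreover have "\<bar>cmod y - cmod x\<bar> \<le> cmod (x - y)" by (metis norm_triangle_ineq3 norm_minus_commute)
  moreover have "cmod ((x - y) / cmod y) = cmod (x - y) / cmod y" by (simp add: norm_divide)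
  ultimately have "cmod (x / cmod x - y / cmod y) \<le> (\<bar>cmod y - cmod x\<bar> + cmod (x - y)) / cmod y"
    by (simp add: add_divide_distrib)
  also have "\<dots> \<le> (2 * cmod (x - y)) / cmod y"
    using \<open>\<bar>cmod y - cmod x\<bar> \<le> cmod (x - y)\<close> by (intro divide_right_mono) auto
  finally show ?thesis by simp
qed

lemma h_sum: fixes v :: complex and r s s0 :: real
  defines "f \<equiv> (\<lambda>t. (Re v - r * cos t) * (r * cos t) + (Im v - r * sin t) * (r * sin t))"
  shows "f (s0 + s) + f (s0 - s) = 2 * cos s * (f s0 + r\<^sup>2) - 2 * r\<^sup>2"
proof -
  have a: "f t = r * (Re v * cos t + Im v * sin t) - r\<^sup>2" for t
  proof -
    have "f t = r * (Re v * cos t + Im v * sin t) - r\<^sup>2 * ((sin t)\<^sup>2 + (cos t)\<^sup>2)"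
      unfolding f_def power2_eq_square by (simp only: algebra_simps)
    also have "(sin t)\<^sup>2 + (cos t)\<^sup>2 = 1" by (rule sin_cos_squared_add)
    finally show ?thesis by simp
  qed
  have b: "Re v * cos (s0 + s) + Im v * sin (s0 + s) + (Re v * cos (s0 - s) + Im v * sin (s0 - s))
     = 2 * cos s * (Re v * cos s0 + Im v * sin s0)"
    by (simp add: cos_add sin_add cos_diff sin_diff algebra_simps)
  have "f (s0 + s) + f (s0 - s) = r * (Re v * cos (s0 + s) + Im v * sin (s0 + s) + (Re v * cos (s0 - s) + Im v * sin (s0 - s))) - 2 * r\<^sup>2"
    unfolding a by (simp add: algebra_simps)
  also have "\<dots> = 2 * cos s * (f s0 + r\<^sup>2) - 2 * r\<^sup>2" unfolding b a by (simp add: algebra_simps)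
  finally show ?thesis .
qed

lemma refl_formula: fixes n A :: complex assumes n1: "cmod n = 1" and rh: "rh > 0"
  shows "- A - (2 * ((- A) \<bullet> (rh *\<^sub>R n)) / ((rh *\<^sub>R n) \<bullet> (rh *\<^sub>R n))) *\<^sub>R (rh *\<^sub>R n) = n * n * cnj A"
proof -
  have nn: "(Re n)\<^sup>2 + (Im n)\<^sup>2 = 1" using n1 cmod_power2[of n] by simp
  have "(rh *\<^sub>R n) \<bullet> (rh *\<^sub>R n) = rh\<^sup>2" using n1 by (simp add: power2_norm_eq_inner[symmetric] power_mult_distrib)
  moreover have "(- A) \<bullet> (rh *\<^sub>R n) = - rh * (A \<bullet> n)" by simp
  ultimately have "(2 * ((- A) \<bullet> (rh *\<^sub>R n)) / ((rh *\<^sub>R n) \<bullet> (rh *\<^sub>R n))) *\<^sub>R (rh *\<^sub>R n) = (- 2 * (A \<bullet> n)) *\<^sub>R n"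
    using rh by (simp add: power2_eq_square field_simps)
  moreover have "- A + (2 * (A \<bullet> n)) *\<^sub>R n = n * n * cnj A"
  proof (rule complex_eqI)
    have "Re (- A + (2 * (A \<bullet> n)) *\<^sub>R n) - Re (n * n * cnj A) = Re A * ((Re n)\<^sup>2 + (Im n)\<^sup>2 - 1)"
      by (simp add: inner_complex_def algebra_simps power2_eq_square)
    then show "Re (- A + (2 * (A \<bullet> n)) *\<^sub>R n) = Re (n * n * cnj A)" using nn by simp
    have "Im (- A + (2 * (A \<bullet> n)) *\<^sub>R n) - Im (n * n * cnj A) = Im A * ((Re n)\<^sup>2 + (Im n)\<^sup>2 - 1)"
      by (simp add: inner_complex_def algebra_simps power2_eq_square)
    then show "Im (- A + (2 * (A \<bullet> n)) *\<^sub>R n) = Im (n * n * cnj A)" using nn by simp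
  qed
  moreover have "n \<bullet> n = 1" using n1 power2_norm_eq_inner[of n] by simp
  ultimately show ?thesis using rh by simp
qed

lemma spec_bisect: fixes n A B :: complex
  assumes n1: "cmod n = 1" and rh: "rh > 0" and pa: "Re (cnj n * A) > 0" and pb: "Re (cnj n * B) > 0"
    and g: "Im (cnj n * B) / cmod B + Im (cnj n * A) / cmod A = 0"
  shows "specular (rh *\<^sub>R n) (- A) B"
proof -
  have A0: "A \<noteq> 0" and B0: "B \<noteq> 0" using pa pb by auto
  define a where "a = cnj n * A / cmod A"
  define bb where "bb = cnj n * B / cmod B"
  have ca: "cmod a = 1" "cmod bb = 1" using n1 A0 B0 by (auto simp: a_def bb_def norm_divide norm_mult)
  have ra: "Re a > 0" "Re bb > 0" using pa pb A0 B0 by (auto simp: a_def bb_def Re_divide_of_real)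
  have ia: "Im bb = - Im a" using g A0 B0 by (simp add: a_def bb_def Im_divide_of_real)
  have "(Re bb)\<^sup>2 = (Re a)\<^sup>2"
    using ca cmod_power2[of a] cmod_power2[of bb] ia by simp
  then have "Re bb = Re a" using ra by (simp add: power2_eq_iff)
  then have bc: "bb = cnj a" using ia by (simp add: complex_eq_iff)
  have ncn: "n * cnj n = 1" using complex_norm_square[of n] n1 by simp
  have "B = complex_of_real (cmod B) * (n * bb)"
    using B0 ncn by (simp add: bb_def field_simps)
  also have "\<dots> = complex_of_real (cmod B) * (n * (n * cnj A / cmod A))"
    unfolding bc a_def by simp
  also have "\<dots> = (cmod B / cmod A) *\<^sub>R (n * n * cnj A)"
    by (simp add: scaleR_conv_of_real field_simps)
  finally have "B = (cmod B / cmod A) *\<^sub>R (- A - (2 * ((- A) \<bullet> (rh *\<^sub>R n)) / ((rh *\<^sub>R n) \<bullet> (rh *\<^sub>R n))) *\<^sub>R (rh *\<^sub>R n))"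
    using refl_formula[OF n1 rh] by simp
  moreover have "cmod B / cmod A > 0" using A0 B0 by simp
  ultimately show ?thesis unfolding specular_def by blast
qed

context cellctx begin

lemma crn_arc: assumes k: "k \<in> {1..b}" and p: "p \<in> Arc k" and nc: "p \<notin> Crn"
  shows "p \<notin> left_opening a" "p \<notin> right_opening L a" "\<And>k'. k' \<in> {1..b} \<Longrightarrow> p \<in> Arc k' \<Longrightarrow> k' = k"
proof -
  have bk: "bpiece L a b Arc k = Arc k" using k by (auto simp: bpiece_def)
  show "p \<notin> left_opening a"
  proof
    assume "p \<in> left_opening a"
    then have "p \<in> bpiece L a b Arc 0" by (simp add: bpiece_def)
    then have "p \<in> Crn" unfolding corners_def using p bk k by (intro CollectI exI[of _ 0] exI[of _ k]) auto
    then show False using nc by simp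
  qed
  show "p \<notin> right_opening L a"
  proof
    assume "p \<in> right_opening L a"
    then have "p \<in> bpiece L a b Arc (Suc b)" by (simp add: bpiece_def)
    then have "p \<in> Crn" unfolding corners_def using p bk k by (intro CollectI exI[of _ "Suc b"] exI[of _ k]) auto
    then show False using nc by simp
  qed
  fix k' assume k': "k' \<in> {1..b}" "p \<in> Arc k'"
  show "k' = k"
  proof (rule ccontr)
    assume "k' \<noteq> k"
    have "bpiece L a b Arc k' = Arc k'" using k' by (auto simp: bpiece_def)
    then have "p \<in> Crn" unfolding corners_def using p bk k k' \<open>k' \<noteq> k\<close> by (intro CollectI exI[of _ k'] exI[of _ k]) auto
    then show False using nc by simp
  qed
qed

lemma left_img: "left_opening a = (\<lambda>y. \<i> * complex_of_real y) ` {-a..a}"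
  unfolding left_opening_def by (auto simp: complex_eq_iff image_def)

lemma right_img: "right_opening L a = (\<lambda>y. complex_of_real L + \<i> * complex_of_real y) ` {-a..a}"
  unfolding right_opening_def by (auto simp: complex_eq_iff image_def)

lemma closed_left: "closed (left_opening a)"
  unfolding left_img by (intro compact_imp_closed compact_continuous_image continuous_intros) auto

lemma closed_right: "closed (right_opening L a)"
  unfolding right_img by (intro compact_imp_closed compact_continuous_image continuous_intros) auto

lemma closed_arc: assumes "k \<in> {1..b}" shows "closed (Arc k)"
proof -
  obtain \<alpha> \<beta> where "Arc k = (\<lambda>t. c k + complex_of_real (rho k) * cis t) ` {\<alpha>..\<beta>}"
    using arcf(2)[OF assms] by blast
  then show ?thesis
    by (simp only:) (intro compact_imp_closed compact_continuous_image continuous_intros, auto)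
qed

lemma closed_bpiece: "i \<le> Suc b \<Longrightarrow> closed (bpiece L a b Arc i)"
  using closed_left closed_right closed_arc by (auto simp: bpiece_def)

lemma closed_crn: "closed Crn"
proof -
  have "Crn = (\<Union>i\<in>{..Suc b}. \<Union>j\<in>{..Suc b} - {i}. bpiece L a b Arc i \<inter> bpiece L a b Arc j)"
    unfolding corners_def by auto
  then show ?thesis using closed_bpiece by (auto intro!: closed_UN closed_Int)
qed

definition Foth :: "nat \<Rightarrow> complex set" where
  "Foth k = left_opening a \<union> right_opening L a \<union> (\<Union>k'\<in>{1..b} - {k}. Arc k')"

lemma closed_Foth: "closed (Foth k)"
  unfolding Foth_def using closed_left closed_right closed_arc by (auto intro!: closed_UN closed_Un)

lemma Fr_Foth: "Fr \<subseteq> Foth k \<union> Arc k" using gf(7) unfolding Foth_def by auto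

lemma Foth_Fr: "k \<in> {1..b} \<Longrightarrow> Foth k \<subseteq> Fr" using gf(7) unfolding Foth_def by auto

lemma not_Foth: "k \<in> {1..b} \<Longrightarrow> p \<in> Arc k \<Longrightarrow> p \<notin> Crn \<Longrightarrow> p \<notin> Foth k"
  using crn_arc unfolding Foth_def by blast

lemma NN: assumes k: "k \<in> {1..b}" and rv: "returns_via L a r b c Arc Gbox k \<eta>"
  shows "(c k - \<eta>) \<bullet> (\<eta> - ctr) \<ge> 0"
proof -
  obtain p lam where p: "p \<in> Arc k" "lam > 0" "\<eta> - c k = (1 + lam) *\<^sub>R (p - c k)"
     "(p - \<eta>) \<bullet> (\<eta> - ctr) \<ge> 0"
    using RV[OF k rv] by blast
  have pc: "p - c k = (1 / (1 + lam)) *\<^sub>R (\<eta> - c k)" using p(2,3) by simp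
  have "p - \<eta> = (p - c k) - (\<eta> - c k)" by simp
  also have "\<dots> = (1 / (1 + lam) - 1) *\<^sub>R (\<eta> - c k)" unfolding pc by (simp add: algebra_simps)
  also have "1 / (1 + lam) - 1 = - (lam / (1 + lam))" using p(2) by (simp add: field_simps)
  finally have "p - \<eta> = (lam / (1 + lam)) *\<^sub>R (c k - \<eta>)" by (simp add: algebra_simps)
  then have "(p - \<eta>) \<bullet> (\<eta> - ctr) = (lam / (1 + lam)) * ((c k - \<eta>) \<bullet> (\<eta> - ctr))"
    by (simp only: inner_scaleR_left)
  then have "(lam / (1 + lam)) * ((c k - \<eta>) \<bullet> (\<eta> - ctr)) \<ge> 0" using p(4) by simp
  moreover have "lam / (1 + lam) > 0" using p(2) by simp
  ultimately show ?thesis by (meson not_le mult_pos_neg)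
qed

lemma STRICT: assumes k: "k \<in> {1..b}" and th: "\<theta> \<in> illum L a r b c Arc Gbox k"
  shows "(c k - \<theta>) \<bullet> (\<theta> - ctr) > 0"
proof -
  obtain U where U: "openin (top_of_set Sph) U" "\<theta> \<in> U" "\<forall>\<eta>\<in>U. returns_via L a r b c Arc Gbox k \<eta>"
    using th unfolding illum_def by blast
  have thS: "\<theta> \<in> Sph" using U unfolding returns_via_def by auto
  obtain e where e: "e > 0" "\<forall>x'\<in>Sph. dist x' \<theta> < e \<longrightarrow> x' \<in> U"
    using U(1,2) unfolding openin_euclidean_subtopology_iff by blast
  define v where "v = c k - ctr"
  define f where "f = (\<lambda>t. (Re v - r * cos t) * (r * cos t) + (Im v - r * sin t) * (r * sin t))"
  define et where "et = (\<lambda>t. ctr + complex_of_real r * cis t)"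
  have hf: "(c k - et t) \<bullet> (et t - ctr) = f t" for t
    by (simp add: et_def f_def v_def inner_complex_def algebra_simps)
  have r0: "r > 0" using gf(3) .
  have etS: "et t \<in> Sph" for t using r0 by (simp add: et_def dist_norm norm_mult)
  define s0 where "s0 = Arg (\<theta> - ctr)"
  have "cmod (\<theta> - ctr) = r" using thS by (simp add: dist_norm norm_minus_commute)
  then have th_eq: "\<theta> = et s0" using rcis_cmod_Arg[of "\<theta> - ctr"] by (simp add: et_def s0_def rcis_def)
  show ?thesis
  proof (rule ccontr)
    assume "\<not> ?thesis"
    then have f0: "f s0 \<le> 0" using hf th_eq by simp
    define s where "s = min 1 (e / (2 * r))"
    have s: "0 < s" "s \<le> 1" "r * s < e" using e r0 by (auto simp: s_def min_def field_simps)
    have near: "dist (et (s0 + d)) \<theta> < e" if "\<bar>d\<bar> \<le> s" for d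
    proof -
      have "dist (et (s0 + d)) \<theta> = r * cmod (cis (s0 + d) - cis s0)"
        using r0 th_eq by (simp add: et_def dist_norm right_diff_distrib[symmetric] norm_mult)
      also have "\<dots> \<le> r * \<bar>d\<bar>" using cis_dist_le[of "s0 + d" s0] r0 by simp
      also have "\<dots> \<le> r * s" using that r0 by simp
      finally show ?thesis using s by simp
    qed
    have "f (s0 + s) \<ge> 0" "f (s0 + - s) \<ge> 0"
      using NN[OF k] e(2) etS near[of s] near[of "- s"] s U(3) hf by (metis abs_minus_cancel abs_of_pos order_refl)+
    moreover have "f (s0 + s) + f (s0 - s) = 2 * cos s * (f s0 + r\<^sup>2) - 2 * r\<^sup>2"
      using h_sum[of v r s0 s] unfolding f_def by simp
    moreover have "f s0 \<ge> 0" using NN[OF k U(3)[rule_format, OF U(2)]] hf th_eq by simp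
    moreover have "cos s < 1" using cos_monotone_0_pi[of 0 s] s pi_gt3 by simp
    ultimately have "0 \<le> 2 * cos s * r\<^sup>2 - 2 * r\<^sup>2" using f0 by simp
    moreover have "2 * cos s * r\<^sup>2 < 2 * 1 * r\<^sup>2" using \<open>cos s < 1\<close> r0 by simp
    ultimately show False by simp
  qed
qed

end

context cellctx begin

lemma Crn_Fr: "Crn \<subseteq> Fr"
proof
  fix z assume "z \<in> Crn"
  then obtain i where i: "i \<le> Suc b" "z \<in> bpiece L a b Arc i" unfolding corners_def by blast
  then show "z \<in> Fr" using gf(7) by (auto simp: bpiece_def split: if_splits)
qed

lemma pdiff: "(\<eta>::complex) - q = (1 + lam) *\<^sub>R (p - q) \<Longrightarrow> lam > 0 \<Longrightarrow> p - \<eta> = (lam / (1 + lam)) *\<^sub>R (q - \<eta>)"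
proof -
  assume h: "\<eta> - q = (1 + lam) *\<^sub>R (p - q)" "lam > 0"
  have ne: "1 + lam \<noteq> 0" using h(2) by simp
  have "p - q = (1 / (1 + lam)) *\<^sub>R ((1 + lam) *\<^sub>R (p - q))" using ne by simp
  then have pc: "p - q = (1 / (1 + lam)) *\<^sub>R (\<eta> - q)" using h(1) by simp
  have "p - \<eta> = (p - q) - (\<eta> - q)" by simp
  also have "\<dots> = (1 / (1 + lam) - 1) *\<^sub>R (\<eta> - q)" unfolding pc by (simp add: algebra_simps)
  also have "1 / (1 + lam) - 1 = - (lam / (1 + lam))" using h(2) by (simp add: field_simps)
  finally show ?thesis by (simp add: algebra_simps)
qed

lemma SEG:
  assumes k: "k \<in> {1..b}" and x: "x \<in> Sph" and y: "y \<in> Arc k" "y \<notin> Crn"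
    and A: "(y - x) \<bullet> (x - ctr) > 0" and B: "(x - y) \<bullet> (y - c k) > 0"
    and sep: "closed_segment x y \<inter> Foth k = {}"
  shows "seg_ok x y \<and> seg_ok y x"
proof -
  have yF: "y \<in> Fr" using Arc_Fr[OF k] y by auto
  have ycb: "y \<notin> cball ctr r" using yF cball_Fr by auto
  have xF: "x \<notin> Fr" using Sph_Fr[OF x] .
  have xy: "x \<noteq> y" using xF yF by auto
  have xr: "norm (x - ctr) = r" using x by (simp add: dist_norm norm_minus_commute)
  have yr: "norm (y - c k) = rho k" using Arc_sph[OF k y(1)] by (simp add: dist_norm)
  have os: "z \<notin> cball ctr r \<and> z \<notin> Fr" if z: "z \<in> open_segment x y" for z
  proof -
    obtain u where u: "0 < u" "u < 1" "z = (1 - u) *\<^sub>R x + u *\<^sub>R y" using z unfolding in_segment(2) by blast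
    have z1: "z = x + u *\<^sub>R (y - x)" using u by (simp add: algebra_simps)
    have z2: "z = y + (1 - u) *\<^sub>R (x - y)" using u by (simp add: algebra_simps)
    have "norm (z - ctr) > r" unfolding z1 using exit_ball[OF xr A u(1)] .
    then have "z \<notin> cball ctr r" by (simp add: dist_norm norm_minus_commute)
    moreover have "norm (z - c k) > rho k" unfolding z2 using exit_ball[OF yr B] u by simp
    then have "z \<notin> Arc k" using Arc_sph[OF k] by (force simp: dist_norm)
    moreover have "z \<notin> Foth k" using sep z segment_open_subset_closed by blast
    ultimately show ?thesis using Fr_Foth by blast
  qed
  have osF: "open_segment x y \<inter> Fr = {}" using os by blast
  have osI: "open_segment x y \<subseteq> interior Gbox" using L_int[OF Sph_int[OF x] osF] .
  have cell: "closed_segment x y \<subseteq> cell L r Gbox"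
  proof
    fix z assume "z \<in> closed_segment x y"
    then consider "z \<in> open_segment x y" | "z = x" | "z = y" unfolding closed_segment_eq_open by blast
    then show "z \<in> cell L r Gbox"
    proof cases
      case 1 then show ?thesis using os osI interior_subset unfolding cell_def by fastforce
    next
      case 2 then show ?thesis using x Sph_int[OF x] interior_subset unfolding cell_def by fastforce
    next
      case 3 then show ?thesis using yF Fr_sub ycb unfolding cell_def by fastforce
    qed
  qed
  have crn: "\<forall>z\<in>closed_segment x y. z \<notin> Crn"
    unfolding closed_segment_eq_open using os xF y(2) Crn_Fr by blast
  have ops: "\<forall>z\<in>open_segment x y. z \<notin> Ops" using os Ops_Fr by blast
  have tan: "\<forall>z\<in>closed_segment x y. z \<in> Sph \<longrightarrow> (y - x) \<bullet> (z - ctr) \<noteq> 0"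
  proof (intro ballI impI)
    fix z assume z: "z \<in> closed_segment x y" "z \<in> Sph"
    have "z = x" using z os ycb unfolding closed_segment_eq_open by fastforce
    then show "(y - x) \<bullet> (z - ctr) \<noteq> 0" using A by simp
  qed
  have "seg_ok x y" unfolding seg_ok_def using xy cell crn ops tan by blast
  then show ?thesis using seg_ok_sym by blast
qed

lemma re_cnj_inner: "Re (cnj n * A) = A \<bullet> n" by (simp add: inner_complex_def)

end

context cellctx begin

lemma im_rot: "Im (cnj (cis t) * (complex_of_real R * cis s - complex_of_real q * cis t)) = R * sin (s - t)"
  by (simp add: sin_diff algebra_simps)

lemma unit_of: "R > 0 \<Longrightarrow> z = complex_of_real R * w \<Longrightarrow> cmod w = 1 \<Longrightarrow> w = z / complex_of_real (cmod z)"
  by (simp add: norm_mult)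

lemma LOC: assumes k: "k \<in> {1..b}" and th: "\<theta> \<in> illum L a r b c Arc Gbox k"
  shows "\<exists>\<delta>>0. \<forall>\<eta>\<in>Sph. dist \<eta> \<theta> < \<delta> \<longrightarrow> (\<exists>p. good [\<theta>, p, \<eta>] \<and> good [\<eta>, p, \<theta>])"
proof -
  obtain U where U: "openin (top_of_set Sph) U" "\<theta> \<in> U" "\<forall>\<eta>\<in>U. returns_via L a r b c Arc Gbox k \<eta>"
    using th unfolding illum_def by blast
  have thS: "\<theta> \<in> Sph" using U unfolding returns_via_def by auto
  obtain eU where eU: "eU > 0" "\<forall>x'\<in>Sph. dist x' \<theta> < eU \<longrightarrow> x' \<in> U"
    using U(1,2) unfolding openin_euclidean_subtopology_iff by blast
  have rk: "rho k > 0" using arcf(1)[OF k] .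
  obtain p0 lam0 where p0: "p0 \<in> Arc k" "p0 \<notin> Crn" "lam0 > 0" "\<theta> - c k = (1 + lam0) *\<^sub>R (p0 - c k)"
     "open_segment \<theta> p0 \<inter> (Fr \<union> cball ctr r) = {}"
    using RV[OF k U(3)[rule_format, OF U(2)]] by blast
  have A0: "(p0 - \<theta>) \<bullet> (\<theta> - ctr) > 0"
    using pdiff[OF p0(4) p0(3)] STRICT[OF k th] p0(3) by simp
  have p0r: "norm (p0 - c k) = rho k" using Arc_sph[OF k p0(1)] by (simp add: dist_norm)
  have tp0: "\<theta> - p0 = lam0 *\<^sub>R (p0 - c k)" using p0(4) by (simp add: algebra_simps)
  have B0: "(\<theta> - p0) \<bullet> (p0 - c k) > 0"
    unfolding tp0 using p0(3) rk p0r by (simp add: power2_norm_eq_inner[symmetric])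
  obtain \<alpha> \<beta> where ab: "\<alpha> < \<beta>" "\<beta> < \<alpha> + 2 * pi" "Arc k = (\<lambda>t. c k + complex_of_real (rho k) * cis t) ` {\<alpha>..\<beta>}"
    using arcf(2)[OF k] by blast
  define P where "P = (\<lambda>t. c k + complex_of_real (rho k) * cis t)"
  have PA: "P t \<in> Arc k" if "t \<in> {\<alpha>..\<beta>}" for t using that ab(3) P_def by auto
  obtain t0 where t0: "t0 \<in> {\<alpha>..\<beta>}" "p0 = P t0" using p0(1) ab(3) P_def by auto
  have sep0: "closed_segment \<theta> p0 \<inter> Foth k = {}"
  proof -
    have "open_segment \<theta> p0 \<inter> Foth k = {}" using p0(5) Foth_Fr[OF k] by blast
    moreover have "\<theta> \<notin> Foth k" using Sph_Fr[OF thS] Foth_Fr[OF k] by blast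
    moreover have "p0 \<notin> Foth k" using not_Foth[OF k p0(1,2)] .
    ultimately show ?thesis unfolding closed_segment_eq_open by blast
  qed
  obtain d1 where d1: "d1 > 0" "\<forall>x\<in>closed_segment \<theta> p0. \<forall>y\<in>Foth k. d1 \<le> dist x y"
    using separate_compact_closed[OF compact_segment closed_Foth sep0] by blast
  obtain d2 where d2: "d2 > 0" "ball p0 d2 \<subseteq> - Crn"
    using closed_crn p0(2) open_contains_ball[of "- Crn"] by (auto simp: open_Compl)
  obtain d3 where d3: "d3 > 0" "\<forall>x y. dist x \<theta> < d3 \<longrightarrow> dist y p0 < d3 \<longrightarrow> (y - x) \<bullet> (x - ctr) > 0"
    using bil_pert[OF A0] by blast
  obtain d3' where d3': "d3' > 0" "\<forall>y x. dist y p0 < d3' \<longrightarrow> dist x \<theta> < d3' \<longrightarrow> (x - y) \<bullet> (y - c k) > 0"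
    using bil_pert[OF B0] by blast
  define \<delta>1 where "\<delta>1 = min (min d1 d2) (min d3 d3')"
  have \<delta>1: "\<delta>1 > 0" "\<delta>1 \<le> d1" "\<delta>1 \<le> d2" "\<delta>1 \<le> d3" "\<delta>1 \<le> d3'"
    using d1 d2 d3 d3' by (auto simp: \<delta>1_def)
  have SEGP: "seg_ok x y \<and> seg_ok y x \<and> (x - y) \<bullet> (y - c k) > 0 \<and> y \<notin> Crn"
    if x: "x \<in> Sph" and y: "y \<in> Arc k" and dx: "dist x \<theta> < \<delta>1" and dy: "dist y p0 < \<delta>1" for x y
  proof -
    have "y \<in> ball p0 d2" using dy \<delta>1 by (simp add: dist_commute)
    then have yC: "y \<notin> Crn" using d2 by blast
    have A: "(y - x) \<bullet> (x - ctr) > 0" using d3 dx dy \<delta>1 by auto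
    have B: "(x - y) \<bullet> (y - c k) > 0" using d3' dx dy \<delta>1 by auto
    have sep: "closed_segment x y \<inter> Foth k = {}"
    proof (rule ccontr)
      assume "closed_segment x y \<inter> Foth k \<noteq> {}"
      then obtain z' where z': "z' \<in> closed_segment x y" "z' \<in> Foth k" by blast
      then obtain u where u: "0 \<le> u" "u \<le> 1" "z' = (1 - u) *\<^sub>R x + u *\<^sub>R y" unfolding in_segment(1) by blast
      define z where "z = (1 - u) *\<^sub>R \<theta> + u *\<^sub>R p0"
      have zs: "z \<in> closed_segment \<theta> p0" unfolding in_segment(1) z_def using u by blast
      have zz: "z' - z = (1 - u) *\<^sub>R (x - \<theta>) + u *\<^sub>R (y - p0)" unfolding u(3) z_def by (simp add: algebra_simps)
      have "(1 - u) * norm (x - \<theta>) + u * norm (y - p0) < (1 - u) * \<delta>1 + u * \<delta>1"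
      proof (cases "u = 0")
        case True then show ?thesis using dx by (simp add: dist_norm)
      next
        case False
        have "u * norm (y - p0) < u * \<delta>1" using False u dy by (simp add: dist_norm)
        moreover have "(1 - u) * norm (x - \<theta>) \<le> (1 - u) * \<delta>1" using u dx by (intro mult_left_mono) (auto simp: dist_norm)
        ultimately show ?thesis by linarith
      qed
      moreover have "norm (z' - z) \<le> norm ((1 - u) *\<^sub>R (x - \<theta>)) + norm (u *\<^sub>R (y - p0))"
        unfolding zz by (rule norm_triangle_ineq)
      moreover have "norm ((1 - u) *\<^sub>R (x - \<theta>)) + norm (u *\<^sub>R (y - p0)) = (1 - u) * norm (x - \<theta>) + u * norm (y - p0)"
        using u by simp
      ultimately have "norm (z' - z) < \<delta>1" by (simp add: algebra_simps)
      then have "dist z z' < d1" using \<delta>1 by (simp add: dist_norm norm_minus_commute)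
      then show False using d1(2) zs z'(2) by fastforce
    qed
    show ?thesis using SEG[OF k x y yC A B sep] B yC by blast
  qed
  define \<epsilon>0 where "\<epsilon>0 = min (min pi (2 * pi - (\<beta> - \<alpha>))) (\<delta>1 / rho k)"
  have "\<epsilon>0 \<le> \<delta>1 / rho k" by (simp add: \<epsilon>0_def)
  then have e04: "rho k * \<epsilon>0 \<le> \<delta>1" using rk by (simp add: field_simps)
  have "2 * pi - (\<beta> - \<alpha>) > 0" "\<delta>1 / rho k > 0" using ab \<delta>1 rk by auto
  then have e0: "\<epsilon>0 > 0" "\<epsilon>0 \<le> pi" "\<epsilon>0 \<le> 2 * pi - (\<beta> - \<alpha>)" "rho k * \<epsilon>0 \<le> \<delta>1"
    using e04 by (auto simp: \<epsilon>0_def)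
  define \<kappa>0 where "\<kappa>0 = 2 - 2 * cos \<epsilon>0"
  have "cos \<epsilon>0 < cos 0" using cos_monotone_0_pi[of 0 \<epsilon>0] e0 by simp
  then have k0: "\<kappa>0 > 0" by (simp add: \<kappa>0_def)
  have thc: "cmod (\<theta> - c k) > 0"
  proof -
    have "cmod (\<theta> - c k) = (1 + lam0) * rho k" using p0(3,4) p0r by simp
    then show ?thesis using p0(3) rk by simp
  qed
  define d4 where "d4 = sqrt \<kappa>0 * cmod (\<theta> - c k) / 2"
  have d4: "d4 > 0" using k0 thc by (simp add: d4_def)
  define \<delta> where "\<delta> = min eU (min \<delta>1 d4)"
  have \<delta>: "\<delta> > 0" "\<delta> \<le> eU" "\<delta> \<le> \<delta>1" "\<delta> \<le> d4" using eU \<delta>1 d4 by (auto simp: \<delta>_def)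
  have cis_t0: "cis t0 = (\<theta> - c k) / cmod (\<theta> - c k)"
  proof -
    have "\<theta> - c k = complex_of_real ((1 + lam0) * rho k) * cis t0"
      using p0(4) t0(2) P_def by (simp add: scaleR_conv_of_real)
    then show ?thesis using unit_of[of "(1 + lam0) * rho k"] p0(3) rk by simp
  qed
  show ?thesis
  proof (intro exI[of _ \<delta>] conjI \<delta>(1) ballI impI)
    fix \<eta> assume eS: "\<eta> \<in> Sph" and de: "dist \<eta> \<theta> < \<delta>"
    have rve: "returns_via L a r b c Arc Gbox k \<eta>" using U(3) eU(2) eS de \<delta> by auto
    obtain p1 lam1 where p1: "p1 \<in> Arc k" "lam1 > 0" "\<eta> - c k = (1 + lam1) *\<^sub>R (p1 - c k)"
      using RV[OF k rve] by blast
    obtain t1 where t1: "t1 \<in> {\<alpha>..\<beta>}" "p1 = P t1" using p1(1) ab(3) P_def by auto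
    have p1r: "norm (p1 - c k) = rho k" using Arc_sph[OF k p1(1)] by (simp add: dist_norm)
    have ec: "cmod (\<eta> - c k) = (1 + lam1) * rho k" using p1(2,3) p1r by simp
    have ec0: "cmod (\<eta> - c k) > 0" using ec p1(2) rk by simp
    have cis_t1: "cis t1 = (\<eta> - c k) / cmod (\<eta> - c k)"
    proof -
      have "\<eta> - c k = complex_of_real ((1 + lam1) * rho k) * cis t1"
        using p1(3) t1(2) P_def by (simp add: scaleR_conv_of_real)
      then show ?thesis using unit_of[of "(1 + lam1) * rho k"] p1(2) rk by simp
    qed
    have "cmod (cis t1 - cis t0) \<le> 2 * cmod ((\<eta> - c k) - (\<theta> - c k)) / cmod (\<theta> - c k)"
      unfolding cis_t0 cis_t1 using unit_diff[of "\<eta> - c k" "\<theta> - c k"] ec0 thc by simp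
    also have "\<dots> = 2 * dist \<eta> \<theta> / cmod (\<theta> - c k)" by (simp add: dist_norm)
    also have "\<dots> < 2 * d4 / cmod (\<theta> - c k)" using de \<delta> thc by (simp add: divide_strict_right_mono)
    also have "\<dots> = sqrt \<kappa>0" using thc by (simp add: d4_def)
    finally have cclose: "cmod (cis t1 - cis t0) < sqrt \<kappa>0" .
    have tclose: "\<bar>t1 - t0\<bar> < \<epsilon>0"
    proof (rule ccontr)
      assume "\<not> ?thesis"
      then have "cos (t1 - t0) \<le> cos \<epsilon>0"
        using t0(1) t1(1) e0 by (intro cos_far) auto
      then have "\<kappa>0 \<le> (cmod (cis t1 - cis t0))\<^sup>2" unfolding cis_dist_sq \<kappa>0_def by simp
      moreover have "(cmod (cis t1 - cis t0))\<^sup>2 < \<kappa>0"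
        using cclose k0 by (metis norm_ge_zero power_strict_mono real_sqrt_pow2 less_imp_le zero_less_numeral)
      ultimately show False by simp
    qed
    define g where "g = (\<lambda>t. Im (cnj (cis t) * (\<eta> - P t)) / cmod (\<eta> - P t) + Im (cnj (cis t) * (\<theta> - P t)) / cmod (\<theta> - P t))"
    define I where "I = {min t0 t1..max t0 t1}"
    have tI: "t \<in> {\<alpha>..\<beta>} \<and> dist (P t) p0 < \<delta>1" if tt: "t \<in> I" for t
    proof
      show "t \<in> {\<alpha>..\<beta>}" using tt t0(1) t1(1) by (auto simp: I_def)
      have "\<bar>t - t0\<bar> \<le> \<bar>t1 - t0\<bar>" using tt by (auto simp: I_def)
      then have "\<bar>t - t0\<bar> < \<epsilon>0" using tclose by simp
      have "dist (P t) p0 = rho k * cmod (cis t - cis t0)"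
        using t0(2) rk by (simp add: P_def dist_norm right_diff_distrib[symmetric] norm_mult)
      also have "\<dots> \<le> rho k * \<bar>t - t0\<bar>" using cis_dist_le[of t t0] rk by simp
      also have "\<dots> < rho k * \<epsilon>0" using \<open>\<bar>t - t0\<bar> < \<epsilon>0\<close> rk by simp
      finally show "dist (P t) p0 < \<delta>1" using e0 by simp
    qed
    have deta: "dist \<eta> \<theta> < d3'" "dist \<theta> \<theta> < d3'" using de \<delta> \<delta>1 d3' by auto
    have BI: "(\<theta> - P t) \<bullet> (P t - c k) > 0 \<and> (\<eta> - P t) \<bullet> (P t - c k) > 0" if "t \<in> I" for t
      using d3'(2) tI[OF that] \<delta>1 deta by auto
    have nz: "\<eta> - P t \<noteq> 0 \<and> \<theta> - P t \<noteq> 0" if "t \<in> I" for t using BI[OF that] by auto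
    have contg: "continuous_on I g"
      unfolding g_def P_def using nz unfolding P_def
      by (intro continuous_intros) auto
    have Pt0: "P t0 = p0" using t0 by simp
    have Pt1: "P t1 = p1" using t1 by simp
    have eta_c: "\<eta> - c k = complex_of_real (cmod (\<eta> - c k)) * cis t1" using cis_t1 ec0 by simp
    have th_c: "\<theta> - c k = complex_of_real (cmod (\<theta> - c k)) * cis t0" using cis_t0 thc by simp
    have g0: "g t0 = cmod (\<eta> - c k) * sin (t1 - t0) / cmod (\<eta> - p0)"
    proof -
      have "\<eta> - P t0 = complex_of_real (cmod (\<eta> - c k)) * cis t1 - complex_of_real (rho k) * cis t0"
        using eta_c by (simp add: P_def algebra_simps)
      then have a1: "Im (cnj (cis t0) * (\<eta> - P t0)) = cmod (\<eta> - c k) * sin (t1 - t0)" using im_rot by simp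
      have "\<theta> - P t0 = complex_of_real (cmod (\<theta> - c k)) * cis t0 - complex_of_real (rho k) * cis t0"
        using th_c by (simp add: P_def algebra_simps)
      then have a2: "Im (cnj (cis t0) * (\<theta> - P t0)) = 0" using im_rot[of t0 "cmod (\<theta> - c k)" t0 "rho k"] by simp
      show ?thesis unfolding g_def a1 a2 by (simp add: Pt0)
    qed
    have g1: "g t1 = cmod (\<theta> - c k) * sin (t0 - t1) / cmod (\<theta> - p1)"
    proof -
      have "\<theta> - P t1 = complex_of_real (cmod (\<theta> - c k)) * cis t0 - complex_of_real (rho k) * cis t1"
        using th_c by (simp add: P_def algebra_simps)
      then have a1: "Im (cnj (cis t1) * (\<theta> - P t1)) = cmod (\<theta> - c k) * sin (t0 - t1)" using im_rot by simp
      have "\<eta> - P t1 = complex_of_real (cmod (\<eta> - c k)) * cis t1 - complex_of_real (rho k) * cis t1"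
        using eta_c by (simp add: P_def algebra_simps)
      then have a2: "Im (cnj (cis t1) * (\<eta> - P t1)) = 0" using im_rot[of t1 "cmod (\<eta> - c k)" t1 "rho k"] by simp
      show ?thesis unfolding g_def a1 a2 by (simp add: Pt1)
    qed
    have "g t0 * g t1 = - ((cmod (\<eta> - c k) * cmod (\<theta> - c k)) / (cmod (\<eta> - p0) * cmod (\<theta> - p1))) * (sin (t1 - t0))\<^sup>2"
    proof -
      have "sin (t0 - t1) = - sin (t1 - t0)" by (metis minus_diff_eq sin_minus)
      then show ?thesis unfolding g0 g1 by (simp add: power2_eq_square)
    qed
    also have "\<dots> \<le> 0" by (intro mult_nonpos_nonneg) auto
    finally have gg: "g t0 * g t1 \<le> 0" .
    obtain ts where ts: "ts \<in> I" "g ts = 0" using ivt0'[of t0 t1 g] contg gg unfolding I_def by blast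
    define p where "p = P ts"
    have pA: "p \<in> Arc k" using PA tI[OF ts(1)] p_def by blast
    have pd: "dist p p0 < \<delta>1" using tI[OF ts(1)] p_def by blast
    have deS: "dist \<eta> \<theta> < \<delta>1" "dist \<theta> \<theta> < \<delta>1" using de \<delta> \<delta>1 by auto
    have S1: "seg_ok \<theta> p \<and> seg_ok p \<theta> \<and> (\<theta> - p) \<bullet> (p - c k) > 0 \<and> p \<notin> Crn" using SEGP[OF thS pA deS(2) pd] .
    have S2: "seg_ok \<eta> p \<and> seg_ok p \<eta> \<and> (\<eta> - p) \<bullet> (p - c k) > 0" using SEGP[OF eS pA deS(1) pd] by blast
    have pck: "p - c k = rho k *\<^sub>R cis ts" by (simp add: p_def P_def scaleR_conv_of_real)
    have pos1: "Re (cnj (cis ts) * (\<theta> - p)) > 0"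
    proof -
      have "rho k * ((\<theta> - p) \<bullet> cis ts) > 0" using S1 unfolding pck by simp
      then show ?thesis using rk unfolding re_cnj_inner by (simp add: zero_less_mult_iff)
    qed
    have pos2: "Re (cnj (cis ts) * (\<eta> - p)) > 0"
    proof -
      have "rho k * ((\<eta> - p) \<bullet> cis ts) > 0" using S2 unfolding pck by simp
      then show ?thesis using rk unfolding re_cnj_inner by (simp add: zero_less_mult_iff)
    qed
    have gz: "Im (cnj (cis ts) * (\<eta> - p)) / cmod (\<eta> - p) + Im (cnj (cis ts) * (\<theta> - p)) / cmod (\<theta> - p) = 0"
      using ts(2) unfolding g_def p_def by simp
    have sp1: "specular (p - c k) (p - \<theta>) (\<eta> - p)"
      using spec_bisect[of "cis ts" "rho k" "\<theta> - p" "\<eta> - p"] rk pos1 pos2 gz unfolding pck by simp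
    have sp2: "specular (p - c k) (p - \<eta>) (\<theta> - p)"
      using spec_bisect[of "cis ts" "rho k" "\<eta> - p" "\<theta> - p"] rk pos1 pos2 gz unfolding pck by (simp add: add.commute)
    have pF: "p \<in> Fr" using Arc_Fr[OF k] pA by blast
    have pO: "p \<notin> Ops" using crn_arc(1,2)[OF k pA] S1 by blast
    have v1: "vert_ok \<theta> p \<eta>" unfolding vert_ok_def using pF pO sp1 crn_arc(3)[OF k pA] S1 by blast
    have v2: "vert_ok \<eta> p \<theta>" unfolding vert_ok_def using pF pO sp2 crn_arc(3)[OF k pA] S1 by blast
    show "\<exists>p. good [\<theta>, p, \<eta>] \<and> good [\<eta>, p, \<theta>]"
      using S1 S2 v1 v2 by (intro exI[of _ p]) simp
  qed
qed
end

context cellctx begin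

definition conn :: "complex \<Rightarrow> complex \<Rightarrow> bool" where
  "conn u v \<longleftrightarrow> (\<exists>xs. good xs \<and> hd xs = u \<and> last xs = v)"

lemma good_len: "good xs \<Longrightarrow> length xs \<ge> 2" using good_idx by blast

lemma app_hd_last: assumes "good xs" "good ys"
  shows "hd (xs @ tl ys) = hd xs" "last (xs @ tl ys) = last ys"
proof -
  have "xs \<noteq> []" "length ys \<ge> 2" using good_len assms by fastforce+
  moreover have "tl ys \<noteq> []" using \<open>length ys \<ge> 2\<close> by (cases ys) auto
  ultimately show "hd (xs @ tl ys) = hd xs" "last (xs @ tl ys) = last ys"
    by (auto simp: last_tl)
qed

lemma good_join: "good xs \<Longrightarrow> good ys \<Longrightarrow> last xs = hd ys \<Longrightarrow> hd ys \<in> Sph \<Longrightarrow>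
   good (xs @ tl ys) \<and> hd (xs @ tl ys) = hd xs \<and> last (xs @ tl ys) = last ys"
  using good_append app_hd_last by blast

lemma conn_trans: assumes "conn u v" "conn v w" "v \<in> Sph" shows "conn u w"
proof -
  obtain xs ys where "good xs" "hd xs = u" "last xs = v" "good ys" "hd ys = v" "last ys = w"
    using assms unfolding conn_def by blast
  note h = this
  have "good (xs @ tl ys) \<and> hd (xs @ tl ys) = hd xs \<and> last (xs @ tl ys) = last ys"
    using good_join[of xs ys] h assms(3) by simp
  then show ?thesis unfolding conn_def using h by metis
qed

lemma local_conn: assumes oc: "one_controllable L a r b c Arc Gbox" and th: "\<theta> \<in> Sph"
  shows "\<exists>\<delta>>0. \<forall>\<eta>\<in>Sph. dist \<eta> \<theta> < \<delta> \<longrightarrow> conn \<theta> \<eta> \<and> conn \<eta> \<theta>"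
proof -
  obtain k where k: "k \<in> {1..b}" "\<theta> \<in> illum L a r b c Arc Gbox k"
    using oc th unfolding one_controllable_def by blast
  obtain \<delta> where "\<delta> > 0" "\<forall>\<eta>\<in>Sph. dist \<eta> \<theta> < \<delta> \<longrightarrow> (\<exists>p. good [\<theta>, p, \<eta>] \<and> good [\<eta>, p, \<theta>])"
    using LOC[OF k] by blast
  then show ?thesis unfolding conn_def by (intro exI[of _ \<delta>]) fastforce
qed

lemma reach: assumes oc: "one_controllable L a r b c Arc Gbox" and "\<theta>0 \<in> Sph" "\<theta> \<in> Sph"
  shows "\<theta> = \<theta>0 \<or> conn \<theta>0 \<theta>"
proof -
  define A where "A = {\<eta>\<in>Sph. \<eta> = \<theta>0 \<or> conn \<theta>0 \<eta>}"
  have opA: "openin (top_of_set Sph) A"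
    unfolding openin_euclidean_subtopology_iff
  proof (intro conjI ballI)
    show "A \<subseteq> Sph" by (auto simp: A_def)
    fix x assume x: "x \<in> A"
    then have xS: "x \<in> Sph" by (simp add: A_def)
    obtain \<delta> where d: "\<delta> > 0" "\<forall>\<eta>\<in>Sph. dist \<eta> x < \<delta> \<longrightarrow> conn x \<eta> \<and> conn \<eta> x"
      using local_conn[OF oc xS] by blast
    show "\<exists>e>0. \<forall>x'\<in>Sph. dist x' x < e \<longrightarrow> x' \<in> A"
    proof (intro exI[of _ \<delta>] conjI ballI impI d(1))
      fix x' assume "x' \<in> Sph" "dist x' x < \<delta>"
      then have "conn x x'" using d by blast
      have "x = \<theta>0 \<or> conn \<theta>0 x" using x by (simp add: A_def)
      then have "conn \<theta>0 x'"
      proof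
        assume "x = \<theta>0" then show ?thesis using \<open>conn x x'\<close> by simp
      next
        assume "conn \<theta>0 x" then show ?thesis using \<open>conn x x'\<close> conn_trans xS by blast
      qed
      then show "x' \<in> A" using \<open>x' \<in> Sph\<close> by (simp add: A_def)
    qed
  qed
  have opB: "openin (top_of_set Sph) (Sph - A)"
    unfolding openin_euclidean_subtopology_iff
  proof (intro conjI ballI)
    show "Sph - A \<subseteq> Sph" by auto
    fix x assume x: "x \<in> Sph - A"
    then have xS: "x \<in> Sph" by simp
    obtain \<delta> where d: "\<delta> > 0" "\<forall>\<eta>\<in>Sph. dist \<eta> x < \<delta> \<longrightarrow> conn x \<eta> \<and> conn \<eta> x"
      using local_conn[OF oc xS] by blast
    show "\<exists>e>0. \<forall>x'\<in>Sph. dist x' x < e \<longrightarrow> x' \<in> Sph - A"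
    proof (intro exI[of _ \<delta>] conjI ballI impI d(1))
      fix x' assume x': "x' \<in> Sph" "dist x' x < \<delta>"
      then have "conn x' x" using d by blast
      show "x' \<in> Sph - A"
      proof
        show "x' \<in> Sph" using x' by simp
        show "x' \<notin> A"
        proof
          assume "x' \<in> A"
          then have "x' = \<theta>0 \<or> conn \<theta>0 x'" by (simp add: A_def)
          then have "conn \<theta>0 x"
          proof
            assume "x' = \<theta>0" then show ?thesis using \<open>conn x' x\<close> by simp
          next
            assume "conn \<theta>0 x'" then show ?thesis using \<open>conn x' x\<close> conn_trans x' by blast
          qed
          then have "x \<in> A" using xS by (simp add: A_def)
          then show False using x by simp
        qed
      qed
    qed
  qed
  have "closedin (top_of_set Sph) A"
    using opB unfolding closedin_def by (auto simp: A_def)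
  moreover have "connected Sph" by (rule connected_sphere) simp
  ultimately have "A = {} \<or> A = Sph" using opA connected_clopen by blast
  moreover have "\<theta>0 \<in> A" using assms by (simp add: A_def)
  ultimately have "A = Sph" by blast
  then have "\<theta> \<in> A" using assms by simp
  then show ?thesis by (simp add: A_def)
qed

lemma SEG_gen:
  assumes x: "x \<in> Sph" and yF: "y \<in> Fr" and yC: "y \<notin> Crn"
    and A: "(y - x) \<bullet> (x - ctr) > 0" and osF: "open_segment x y \<inter> Fr = {}"
  shows "seg_ok x y \<and> seg_ok y x"
proof -
  have ycb: "y \<notin> cball ctr r" using yF cball_Fr by auto
  have xF: "x \<notin> Fr" using Sph_Fr[OF x] .
  have xy: "x \<noteq> y" using xF yF by auto
  have xr: "norm (x - ctr) = r" using x by (simp add: dist_norm norm_minus_commute)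
  have os: "z \<notin> cball ctr r \<and> z \<notin> Fr" if z: "z \<in> open_segment x y" for z
  proof -
    obtain u where u: "0 < u" "u < 1" "z = (1 - u) *\<^sub>R x + u *\<^sub>R y" using z unfolding in_segment(2) by blast
    have z1: "z = x + u *\<^sub>R (y - x)" using u by (simp add: algebra_simps)
    have "norm (z - ctr) > r" unfolding z1 using exit_ball[OF xr A u(1)] .
    then have "z \<notin> cball ctr r" by (simp add: dist_norm norm_minus_commute)
    then show ?thesis using osF z by blast
  qed
  have osI: "open_segment x y \<subseteq> interior Gbox" using L_int[OF Sph_int[OF x] osF] .
  have cell: "closed_segment x y \<subseteq> cell L r Gbox"
  proof
    fix z assume "z \<in> closed_segment x y"
    then consider "z \<in> open_segment x y" | "z = x" | "z = y" unfolding closed_segment_eq_open by blast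
    then show "z \<in> cell L r Gbox"
    proof cases
      case 1 then show ?thesis using os osI interior_subset unfolding cell_def by fastforce
    next
      case 2 then show ?thesis using x Sph_int[OF x] interior_subset unfolding cell_def by fastforce
    next
      case 3 then show ?thesis using yF Fr_sub ycb unfolding cell_def by fastforce
    qed
  qed
  have crn: "\<forall>z\<in>closed_segment x y. z \<notin> Crn"
    unfolding closed_segment_eq_open using os xF yC Crn_Fr by blast
  have ops: "\<forall>z\<in>open_segment x y. z \<notin> Ops" using os Ops_Fr by blast
  have tan: "\<forall>z\<in>closed_segment x y. z \<in> Sph \<longrightarrow> (y - x) \<bullet> (z - ctr) \<noteq> 0"
  proof (intro ballI impI)
    fix z assume z: "z \<in> closed_segment x y" "z \<in> Sph"
    have "z = x" using z os ycb unfolding closed_segment_eq_open by fastforce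
    then show "(y - x) \<bullet> (z - ctr) \<noteq> 0" using A by simp
  qed
  have "seg_ok x y" unfolding seg_ok_def using xy cell crn ops tan by blast
  then show ?thesis using seg_ok_sym by blast
qed

definition rad :: "complex \<Rightarrow> complex" where
  "rad z = ctr + (r / cmod (z - ctr)) *\<^sub>R (z - ctr)"

lemma radial: assumes zF: "z \<in> Fr" and zC: "z \<notin> Crn"
  shows "rad z \<in> Sph" "seg_ok (rad z) z" "seg_ok z (rad z)"
proof -
  define D where "D = cmod (z - ctr)"
  have zcb: "z \<notin> cball ctr r" using zF cball_Fr by auto
  have Dr: "D > r" using zcb by (simp add: D_def dist_norm norm_minus_commute)
  have r0: "r > 0" using gf(3) .
  define q where "q = r / D"
  have q: "0 < q" "q < 1" using Dr r0 by (auto simp: q_def)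
  have rz: "rad z = ctr + q *\<^sub>R (z - ctr)" by (simp add: rad_def q_def D_def)
  have "dist ctr (rad z) = q * D" using q by (simp add: rz dist_norm D_def)
  then show rS: "rad z \<in> Sph" using Dr r0 by (simp add: q_def)
  have A: "(z - rad z) \<bullet> (rad z - ctr) > 0"
  proof -
    have "z - rad z = (1 - q) *\<^sub>R (z - ctr)" by (simp add: rz algebra_simps)
    moreover have "rad z - ctr = q *\<^sub>R (z - ctr)" by (simp add: rz)
    ultimately have "(z - rad z) \<bullet> (rad z - ctr) = (1 - q) * q * ((z - ctr) \<bullet> (z - ctr))" by simp
    moreover have "(z - ctr) \<bullet> (z - ctr) > 0" using Dr r0 D_def by auto
    ultimately show ?thesis using q by simp
  qed
  have osF: "open_segment (rad z) z \<inter> Fr = {}"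
  proof -
    have "rad z \<in> closed_segment ctr z" unfolding in_segment(1) rz using q
      by (intro exI[of _ q]) (auto simp: algebra_simps)
    then have "closed_segment (rad z) z \<subseteq> closed_segment ctr z"
      by (simp add: subset_closed_segment)
    then have "open_segment (rad z) z \<subseteq> closed_segment ctr z - {z}"
      using segment_open_subset_closed open_segment_def by fastforce
    then show ?thesis using gf(9) zF by blast
  qed
  show "seg_ok (rad z) z" "seg_ok z (rad z)" using SEG_gen[OF rS zF zC A osF] by auto
qed

end

lemma circ_y: assumes "dist (Complex x y) w = R"
  shows "y = Im w + sqrt (R\<^sup>2 - (x - Re w)\<^sup>2) \<or> y = Im w - sqrt (R\<^sup>2 - (x - Re w)\<^sup>2)"
proof -
  have "R\<^sup>2 = (x - Re w)\<^sup>2 + (y - Im w)\<^sup>2" using assms[symmetric] by (simp add: dist_norm cmod_power2)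
  then have "sqrt (R\<^sup>2 - (x - Re w)\<^sup>2) = \<bar>y - Im w\<bar>" by simp
  then show ?thesis by (cases "y \<ge> Im w") auto
qed

context cellctx begin

lemma crn_cases: "p \<in> Crn \<Longrightarrow> (\<exists>k\<in>{1..b}. p \<in> Arc k) \<or> (p \<in> left_opening a \<and> p \<in> right_opening L a)"
proof -
  assume "p \<in> Crn"
  then obtain i j where ij: "i \<le> Suc b" "j \<le> Suc b" "i \<noteq> j" "p \<in> bpiece L a b Arc i" "p \<in> bpiece L a b Arc j"
    unfolding corners_def by blast
  show ?thesis
  proof (cases "i \<in> {1..b}")
    case True then show ?thesis using ij by (auto simp: bpiece_def split: if_splits)
  next
    case F1: False
    show ?thesis
    proof (cases "j \<in> {1..b}")
      case True then show ?thesis using ij by (auto simp: bpiece_def split: if_splits)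
    next
      case False
      then have "(i = 0 \<and> j = Suc b) \<or> (i = Suc b \<and> j = 0)" using F1 ij by auto
      then show ?thesis using ij by (auto simp: bpiece_def)
    qed
  qed
qed

lemma exit_pt: "\<exists>y0. -a \<le> y0 \<and> y0 \<le> a \<and> Complex 0 y0 \<notin> Crn \<and> Complex L y0 \<notin> Crn"
proof -
  define Bad where "Bad = (\<Union>k\<in>{1..b}. {Im (c k) + sqrt ((rho k)\<^sup>2 - (0 - Re (c k))\<^sup>2), Im (c k) - sqrt ((rho k)\<^sup>2 - (0 - Re (c k))\<^sup>2),
      Im (c k) + sqrt ((rho k)\<^sup>2 - (L - Re (c k))\<^sup>2), Im (c k) - sqrt ((rho k)\<^sup>2 - (L - Re (c k))\<^sup>2)})"
  have fB: "finite Bad" by (simp add: Bad_def)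
  have "infinite {-a<..<a}" using gf(2) by (simp add: infinite_Ioo)
  then have "infinite ({-a<..<a} - Bad)" using fB by (rule Diff_infinite_finite[rotated])
  then obtain y0 where y0: "y0 \<in> {-a<..<a}" "y0 \<notin> Bad" using infinite_imp_nonempty by blast
  have L0: "L > 0" using gf(1) .
  have n1: "Complex 0 y0 \<notin> Crn"
  proof
    assume "Complex 0 y0 \<in> Crn"
    then consider (A) k where "k \<in> {1..b}" "Complex 0 y0 \<in> Arc k" | (B) "Complex 0 y0 \<in> right_opening L a"
      using crn_cases by blast
    then show False
    proof cases
      case A
      then have "dist (Complex 0 y0) (c k) = rho k" using Arc_sph by blast
      then have "y0 \<in> Bad" using circ_y[of 0 y0 "c k" "rho k"] A(1) unfolding Bad_def by blast
      then show False using y0 by simp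
    next
      case B then show False using L0 by (auto simp: right_opening_def)
    qed
  qed
  have n2: "Complex L y0 \<notin> Crn"
  proof
    assume "Complex L y0 \<in> Crn"
    then consider (A) k where "k \<in> {1..b}" "Complex L y0 \<in> Arc k" | (B) "Complex L y0 \<in> left_opening a"
      using crn_cases by blast
    then show False
    proof cases
      case A
      then have "dist (Complex L y0) (c k) = rho k" using Arc_sph by blast
      then have "y0 \<in> Bad" using circ_y[of L y0 "c k" "rho k"] A(1) unfolding Bad_def by blast
      then show False using y0 by simp
    next
      case B then show False using L0 by (auto simp: left_opening_def)
    qed
  qed
  show ?thesis using y0 n1 n2 by (intro exI[of _ y0]) auto
qed

lemma conn_rad: assumes "z \<in> Fr" "z \<notin> Crn" shows "conn (rad z) z" "conn z (rad z)"
proof -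
  have "good [rad z, z]" "good [z, rad z]" using radial[OF assms] by auto
  then show "conn (rad z) z" "conn z (rad z)" unfolding conn_def
    by (metis last.simps list.sel(1) list.distinct(1))+
qed

lemma cellpaths: assumes oc: "one_controllable L a r b c Arc Gbox"
  shows "\<exists>y0. -a \<le> y0 \<and> y0 \<le> a \<and> (\<forall>\<theta>\<in>Sph. conn \<theta> (Complex 0 y0) \<and> conn \<theta> (Complex L y0)) \<and>
     conn (Complex L y0) (Complex 0 y0) \<and> conn (Complex 0 y0) (Complex L y0)"
proof -
  obtain y0 where y0: "-a \<le> y0" "y0 \<le> a" "Complex 0 y0 \<notin> Crn" "Complex L y0 \<notin> Crn" using exit_pt by blast
  define zL where "zL = Complex 0 y0"
  define zR where "zR = Complex L y0"
  have zLF: "zL \<in> Fr" using y0 Ops_Fr unfolding zL_def left_opening_def by blast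
  have zRF: "zR \<in> Fr" using y0 Ops_Fr unfolding zR_def right_opening_def by blast
  have to: "conn \<theta> z" if th: "\<theta> \<in> Sph" and z: "z \<in> Fr" "z \<notin> Crn" for \<theta> z
  proof -
    have rS: "rad z \<in> Sph" using radial[OF z] by blast
    have "rad z = \<theta> \<or> conn \<theta> (rad z)" using reach[OF oc th rS] .
    then show ?thesis
    proof
      assume "rad z = \<theta>" then show ?thesis using conn_rad[OF z] by simp
    next
      assume "conn \<theta> (rad z)" then show ?thesis using conn_rad[OF z] conn_trans rS by blast
    qed
  qed
  have A: "\<forall>\<theta>\<in>Sph. conn \<theta> zL \<and> conn \<theta> zR" using to zLF zRF y0 zL_def zR_def by blast
  have B: "conn zR zL"
    using conn_rad(2)[OF zRF] A radial(1)[OF zRF] conn_trans y0 zR_def by blast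
  have C: "conn zL zR"
    using conn_rad(2)[OF zLF] A radial(1)[OF zLF] conn_trans y0 zL_def by blast
  show ?thesis using y0 A B C zL_def zR_def by blast
qed

end

fun glue :: "complex list list \<Rightarrow> complex list" where
  "glue [] = []"
| "glue [Q] = Q"
| "glue (Q # Q' # Qs) = Q @ tl (glue (Q' # Qs))"

definition gok :: "complex list list \<Rightarrow> bool" where
  "gok Qs \<longleftrightarrow> (\<forall>i<length Qs. length (Qs!i) \<ge> 2) \<and> (\<forall>i. Suc i < length Qs \<longrightarrow> last (Qs!i) = hd (Qs!Suc i))"

lemma gok_tl: "gok (Q # Qs) \<Longrightarrow> gok Qs"
  unfolding gok_def by (auto simp del: nth_Cons_Suc)

lemma gok_hd: "gok (Q # Qs) \<Longrightarrow> length Q \<ge> 2"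
  unfolding gok_def by (metis length_greater_0_conv list.distinct(1) nth_Cons_0)

lemma gok_link: "gok (Q # Q' # Qs) \<Longrightarrow> last Q = hd Q'"
  unfolding gok_def by (metis Suc_less_eq length_Cons nth_Cons_0 nth_Cons_Suc zero_less_Suc)

lemma glue_props: "Qs \<noteq> [] \<Longrightarrow> gok Qs \<Longrightarrow>
   glue Qs \<noteq> [] \<and> hd (glue Qs) = hd (Qs!0) \<and> last (glue Qs) = last (last Qs) \<and>
   real (length (glue Qs) - 1) = (\<Sum>j<length Qs. real (length (Qs!j) - 1))"
proof (induction Qs rule: glue.induct)
  case 1 then show ?case by simp
next
  case (2 Q) then show ?case using gok_hd[of Q "[]"] by auto
next
  case (3 Q Q' Qs)
  have IH: "glue (Q' # Qs) \<noteq> [] \<and> hd (glue (Q' # Qs)) = hd Q' \<and> last (glue (Q' # Qs)) = last (last (Q' # Qs)) \<and>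
     real (length (glue (Q' # Qs)) - 1) = (\<Sum>j<length (Q' # Qs). real (length ((Q' # Qs)!j) - 1))"
    using 3 gok_tl by auto
  have lQ: "length Q \<ge> 2" using gok_hd 3 by blast
  have lQ': "length Q' \<ge> 2" using gok_hd gok_tl 3 by blast
  have lg: "length (glue (Q' # Qs)) \<ge> 2"
  proof -
    have "(\<Sum>j<length (Q' # Qs). real (length ((Q' # Qs)!j) - 1)) \<ge> real (length ((Q' # Qs)!0) - 1)"
      by (rule member_le_sum) auto
    moreover have "real (length ((Q' # Qs)!0) - 1) \<ge> 1" using lQ' by simp
    ultimately have "real (length (glue (Q' # Qs)) - 1) \<ge> 1" using IH by linarith
    then have "length (glue (Q' # Qs)) - 1 \<ge> 1" by linarith
    then show ?thesis by simp
  qed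
  have tne: "tl (glue (Q' # Qs)) \<noteq> []" using lg by (cases "glue (Q' # Qs)") auto
  have "real (length (glue (Q # Q' # Qs)) - 1) = real (length Q - 1) + real (length (glue (Q' # Qs)) - 1)"
    using lQ lg by simp
  also have "\<dots> = (\<Sum>j<length (Q # Q' # Qs). real (length ((Q # Q' # Qs)!j) - 1))"
    using IH by (simp only: sum.lessThan_Suc_shift length_Cons nth_Cons_0 nth_Cons_Suc)
  moreover have "Q \<noteq> []" using lQ by auto
  ultimately show ?case using IH tne by (auto simp: last_tl)
qed

lemma pl_glue: "gok Qs \<Longrightarrow> i < length Qs \<Longrightarrow> 0 \<le> s \<Longrightarrow> s \<le> real (length (Qs!i) - 1) \<Longrightarrow>
   pl (glue Qs) ((\<Sum>j<i. real (length (Qs!j) - 1)) + s) = pl (Qs!i) s"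
proof (induction Qs arbitrary: i rule: glue.induct)
  case 1 then show ?case by simp
next
  case (2 Q) then show ?case by simp
next
  case (3 Q Q' Qs)
  have lQ: "length Q \<ge> 2" using gok_hd 3 by blast
  have gp: "glue (Q' # Qs) \<noteq> [] \<and> hd (glue (Q' # Qs)) = hd Q'"
    using glue_props[of "Q' # Qs"] gok_tl[OF "3.prems"(1)] by simp
  show ?case
  proof (cases i)
    case 0
    have "s \<le> real (length Q - 1)" using "3.prems"(4) 0 by simp
    moreover have "Q \<noteq> []" using lQ by auto
    ultimately have "pl (Q @ tl (glue (Q' # Qs))) s = pl Q s" using pl_append_left[of Q s] "3.prems"(3) by blast
    then show ?thesis using 0 by simp
  next
    case (Suc i')
    have sum: "(\<Sum>j<i. real (length ((Q # Q' # Qs)!j) - 1)) = real (length Q - 1) + (\<Sum>j<i'. real (length ((Q' # Qs)!j) - 1))"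
      unfolding Suc by (simp only: sum.lessThan_Suc_shift nth_Cons_0 nth_Cons_Suc)
    have nn: "0 \<le> (\<Sum>j<i'. real (length ((Q' # Qs)!j) - 1)) + s" using 3 by (simp add: sum_nonneg)
    have "pl (glue (Q # Q' # Qs)) ((\<Sum>j<i. real (length ((Q # Q' # Qs)!j) - 1)) + s)
       = pl (Q @ tl (glue (Q' # Qs))) (real (length Q - 1) + ((\<Sum>j<i'. real (length ((Q' # Qs)!j) - 1)) + s))"
      unfolding sum by (simp add: add.assoc)
    also have "\<dots> = pl (glue (Q' # Qs)) ((\<Sum>j<i'. real (length ((Q' # Qs)!j) - 1)) + s)"
    proof -
      have "Q \<noteq> []" using lQ by auto
      then show ?thesis using pl_append_right[of Q "glue (Q' # Qs)"] gp gok_link[OF "3.prems"(1)] nn by simp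
    qed
    also have "\<dots> = pl ((Q' # Qs)!i') s"
      using "3.IH"[of i'] gok_tl[OF "3.prems"(1)] "3.prems" Suc by auto
    finally show ?thesis using Suc by simp
  qed
qed

context cellctx begin

definition off :: "nat \<Rightarrow> complex" where "off l = complex_of_real (real (l - 1) * L)"

lemma assemble:
  fixes Ps :: "(complex list \<times> nat) list" and N :: nat
  assumes ne: "Ps \<noteq> []"
   and g: "\<And>i. i < length Ps \<Longrightarrow> good (fst (Ps!i)) \<and> snd (Ps!i) \<in> {1..N}"
   and jn: "\<And>i. Suc i < length Ps \<Longrightarrow> last (fst (Ps!i)) + off (snd (Ps!i)) = hd (fst (Ps!Suc i)) + off (snd (Ps!Suc i)) \<and>
        snd (Ps!i) \<noteq> snd (Ps!Suc i) \<and> (\<exists>l\<in>{1..<N}. hd (fst (Ps!Suc i)) + off (snd (Ps!Suc i)) \<in> shift (real l * L) (left_opening a))"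
  shows "\<exists>\<gamma>. system_admissible L a r b c Arc Gbox N \<gamma> \<and> \<gamma> 0 = hd (fst (Ps!0)) + off (snd (Ps!0)) \<and>
      \<gamma> 1 = last (fst (last Ps)) + off (snd (last Ps))"
proof -
  define m where "m = length Ps"
  have m1: "m \<ge> 1" using ne m_def by (cases Ps) auto
  define Qs where "Qs = map (\<lambda>P. map (\<lambda>z. z + off (snd P)) (fst P)) Ps"
  have lQs: "length Qs = m" by (simp add: Qs_def m_def)
  have Qi: "Qs!i = map (\<lambda>z. z + off (snd (Ps!i))) (fst (Ps!i))" if "i < m" for i
    using that by (simp add: Qs_def m_def)
  have lfst: "length (fst (Ps!i)) \<ge> 2" if "i < m" for i using g[of i] that good_len m_def by blast
  have lens: "length (Qs!i) = length (fst (Ps!i))" if "i < m" for i using Qi[OF that] by simp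
  have fne: "fst (Ps!i) \<noteq> []" if "i < m" for i using lfst[OF that] by auto
  have gk: "gok Qs" unfolding gok_def
  proof (intro conjI allI impI)
    fix i assume "i < length Qs" then show "length (Qs!i) \<ge> 2" using lens lfst lQs by simp
  next
    fix i assume i: "Suc i < length Qs"
    then have "last (Qs!i) = last (fst (Ps!i)) + off (snd (Ps!i))" using Qi fne lQs by (simp add: last_map)
    also have "\<dots> = hd (fst (Ps!Suc i)) + off (snd (Ps!Suc i))" using jn[of i] i lQs m_def by simp
    also have "\<dots> = hd (Qs!Suc i)" using Qi fne lQs i by (simp add: hd_map)
    finally show "last (Qs!i) = hd (Qs!Suc i)" .
  qed
  define V where "V = glue Qs"
  define n where "n = (\<lambda>i. real (length (Qs!i) - 1))"
  define K where "K = (\<lambda>i. \<Sum>j<i. n j)"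
  have n1: "n i \<ge> 1" if "i < m" for i using lens[OF that] lfst[OF that] by (simp add: n_def)
  have KS: "K (Suc i) = K i + n i" for i by (simp add: K_def)
  have Qne: "Qs \<noteq> []" using lQs m1 by auto
  have GP: "V \<noteq> [] \<and> hd V = hd (Qs!0) \<and> last V = last (last Qs) \<and> real (length V - 1) = K m"
    using glue_props[OF Qne gk] unfolding V_def K_def n_def lQs by simp
  define M where "M = K m"
  have Kn: "K i \<ge> 0" for i unfolding K_def n_def by (simp add: sum_nonneg)
  have "K 1 \<le> K m" unfolding K_def using m1
    by (intro sum_mono2) (auto simp: n_def)
  then have KM: "K m \<ge> n 0" by (simp add: K_def)
  have M0: "M > 0" using KM n1[of 0] m1 M_def by simp
  define \<gamma> where "\<gamma> = polyline V"
  have gam: "\<gamma> t = pl V (M * t)" for t using GP by (simp add: \<gamma>_def polyline_def M_def)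
  define ss where "ss = map (\<lambda>i. K i / M) [0..<Suc m]"
  define ls where "ls = map snd Ps"
  have ssi: "ss!i = K i / M" if "i \<le> m" for i using that by (simp add: ss_def nth_map_upt del: upt_Suc)
  have lss: "length ss = Suc m" by (simp add: ss_def)
  have lls: "length ls = m" by (simp add: ls_def m_def)
  have lsi: "ls!i = snd (Ps!i)" if "i < m" for i using that by (simp add: ls_def m_def)
  have Kmono: "K i < K (Suc i)" if "i < m" for i using KS n1[OF that] by simp
  have cont: "continuous_on {0..1} \<gamma>"
  proof -
    have "continuous_on {0..M} (pl V)" using pl_cont[of V] GP M_def by simp
    then have "continuous_on {0..1} (\<lambda>t. pl V (M * t))"
      by (rule continuous_on_compose2) (auto intro!: continuous_intros simp: M0 less_imp_le)
    then show ?thesis using gam by simp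
  qed
  have piece: "\<gamma> (ss!i + t * (ss!Suc i - ss!i)) - complex_of_real (real (ls!i - 1) * L) = polyline (fst (Ps!i)) t"
    if i: "i < m" and t: "t \<in> {0..1}" for i t
  proof -
    have a: "M * ss!i = K i" "M * ss!Suc i = K i + n i" using ssi[of i] ssi[of "Suc i"] i KS M0 by auto
    have "M * (ss!i + t * (ss!Suc i - ss!i)) = M * ss!i + t * (M * ss!Suc i - M * ss!i)" by (simp add: algebra_simps)
    then have "M * (ss!i + t * (ss!Suc i - ss!i)) = K i + t * n i" unfolding a by simp
    then have "\<gamma> (ss!i + t * (ss!Suc i - ss!i)) = pl V (K i + t * n i)" using gam by simp
    also have "\<dots> = pl (Qs!i) (t * n i)"
    proof -
      have tn: "0 \<le> t * n i" "t * n i \<le> n i" using t n1[OF i] by (auto intro: mult_left_le_one_le)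
      have "pl (glue Qs) ((\<Sum>j<i. real (length (Qs!j) - 1)) + t * n i) = pl (Qs!i) (t * n i)"
        using pl_glue[OF gk, of i "t * n i"] i lQs tn unfolding n_def by blast
      then show ?thesis unfolding V_def K_def n_def by simp
    qed
    also have "\<dots> = pl (fst (Ps!i)) (t * n i) + off (snd (Ps!i))"
      using Qi[OF i] pl_shift fne[OF i] by simp
    finally show ?thesis using lsi[OF i] lens[OF i] by (simp add: off_def polyline_def n_def mult.commute)
  qed
  have junc: "\<gamma> (ss!i) = hd (fst (Ps!i)) + off (snd (Ps!i))" if i: "i < m" for i
  proof -
    have "\<gamma> (ss!i) = pl V (K i)" using gam ssi[of i] i M0 by simp
    also have "\<dots> = pl (Qs!i) 0" unfolding V_def K_def using pl_glue[OF gk, of i 0] i lQs by (simp add: n_def)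
    also have "\<dots> = hd (Qs!i)"
    proof -
      have "Qs!i \<noteq> []" using lens[OF i] lfst[OF i] by (metis le_zero_eq length_0_conv zero_neq_numeral)
      then show ?thesis using pl_0 by blast
    qed
    finally show ?thesis using Qi[OF i] fne[OF i] by (simp add: hd_map)
  qed
  have SA: "system_admissible L a r b c Arc Gbox N \<gamma>"
    unfolding system_admissible_def
  proof (intro conjI cont exI[of _ ss] exI[of _ ls])
    show "2 \<le> length ss" using lss m1 by simp
    show "length ls = length ss - 1" using lss lls by simp
    show "ss!0 = 0" using ssi[of 0] by (simp add: K_def)
    show "ss ! (length ss - 1) = 1" using ssi[of m] lss M0 M_def by simp
    show "\<forall>i. Suc i < length ss \<longrightarrow> ss!i < ss!Suc i"
      using ssi Kmono M0 lss by (auto simp: divide_strict_right_mono)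
    show "\<forall>i<length ls. ls!i \<in> {1..N} \<and> cell_admissible L a r b c Arc Gbox
             (\<lambda>t. \<gamma> (ss!i + t * (ss!Suc i - ss!i)) - complex_of_real (real (ls!i - 1) * L))"
    proof (intro allI impI conjI)
      fix i assume i: "i < length ls"
      then show "ls!i \<in> {1..N}" using g[of i] lsi lls m_def by auto
      show "cell_admissible L a r b c Arc Gbox (\<lambda>t. \<gamma> (ss!i + t * (ss!Suc i - ss!i)) - complex_of_real (real (ls!i - 1) * L))"
        using good_cell_adm[of "fst (Ps!i)"] g[of i] piece[of i] i lls m_def by auto
    qed
    show "\<forall>i. 0 < i \<and> i < length ls \<longrightarrow> ls!(i-1) \<noteq> ls!i \<and> (\<exists>l\<in>{1..<N}. \<gamma> (ss!i) \<in> shift (real l * L) (left_opening a))"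
    proof (intro allI impI)
      fix i assume i: "0 < i \<and> i < length ls"
      then have "Suc (i - 1) < length Ps" using lls m_def by simp
      moreover have "ls!(i-1) = snd (Ps!(i-1))" "ls!i = snd (Ps!i)" using lsi i lls by auto
      moreover have "Suc (i - 1) = i" using i by simp
      moreover have "\<gamma> (ss!i) = hd (fst (Ps!i)) + off (snd (Ps!i))" using junc i lls by auto
      ultimately show "ls!(i-1) \<noteq> ls!i \<and> (\<exists>l\<in>{1..<N}. \<gamma> (ss!i) \<in> shift (real l * L) (left_opening a))"
        using jn[of "i - 1"] by metis
    qed
  qed
  have g0: "\<gamma> 0 = hd (fst (Ps!0)) + off (snd (Ps!0))" using junc[of 0] ssi[of 0] m1 by (simp add: K_def)
  have g1: "\<gamma> 1 = last (fst (last Ps)) + off (snd (last Ps))"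
  proof -
    have "\<gamma> 1 = pl V (real (length V - 1))" using gam GP M_def by simp
    also have "\<dots> = last V" using pl_last GP by blast
    also have "\<dots> = last (Qs!(m-1))" using GP Qne lQs by (simp add: last_conv_nth)
    also have "\<dots> = last (fst (Ps!(m-1))) + off (snd (Ps!(m-1)))" using Qi[of "m-1"] m1 fne[of "m-1"] by (simp add: last_map)
    finally show ?thesis using ne m_def by (simp add: last_conv_nth)
  qed
  show ?thesis using SA g0 g1 by blast
qed

end

context cellctx begin

lemma in_shift_left: "-a \<le> y \<and> y \<le> a \<Longrightarrow> w = Complex (real l * L) y \<Longrightarrow> w \<in> shift (real l * L) (left_opening a)"
  unfolding shift_def left_opening_def by (rule image_eqI[of _ _ "Complex 0 y"]) (auto simp: complex_eq_iff)

lemma main: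
  assumes oc: "one_controllable L a r b c Arc Gbox" and j: "1 \<le> j" "j \<le> N"
    and th: "\<theta> \<in> sphere (ctr + complex_of_real (real (j - 1) * L)) r"
  shows "(\<exists>\<gamma>. system_admissible L a r b c Arc Gbox N \<gamma> \<and> \<gamma> 0 = \<theta> \<and> \<gamma> 1 \<in> left_opening a) \<and>
         (\<exists>\<gamma>. system_admissible L a r b c Arc Gbox N \<gamma> \<and> \<gamma> 0 = \<theta> \<and>
               \<gamma> 1 \<in> shift (real (N - 1) * L) (right_opening L a))"
proof -
  obtain y0 where y0: "-a \<le> y0" "y0 \<le> a" "\<forall>\<theta>\<in>Sph. conn \<theta> (Complex 0 y0) \<and> conn \<theta> (Complex L y0)"
     "conn (Complex L y0) (Complex 0 y0)" "conn (Complex 0 y0) (Complex L y0)"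
    using cellpaths[OF oc] by blast
  define zL where "zL = Complex 0 y0"
  define zR where "zR = Complex L y0"
  define \<theta>' where "\<theta>' = \<theta> - off j"
  have thS: "\<theta>' \<in> Sph" using th unfolding \<theta>'_def off_def by (simp add: dist_norm algebra_simps)
  obtain A where A: "good A" "hd A = \<theta>'" "last A = zL" using y0(3) thS unfolding conn_def zL_def by blast
  obtain A' where A': "good A'" "hd A' = \<theta>'" "last A' = zR" using y0(3) thS unfolding conn_def zR_def by blast
  obtain B where B: "good B" "hd B = zR" "last B = zL" using y0(4) unfolding conn_def zL_def zR_def by blast
  obtain B' where B': "good B'" "hd B' = zL" "last B' = zR" using y0(5) unfolding conn_def zL_def zR_def by blast
  have offv: "off l = complex_of_real (real (l - 1) * L)" for l by (simp add: off_def)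
  define Ps where "Ps = map (\<lambda>i. if i = 0 then (A, j) else (B, j - i)) [0..<j]"
  have lPs: "length Ps = j" by (simp add: Ps_def)
  have Psi: "Ps!i = (if i = 0 then (A, j) else (B, j - i))" if "i < j" for i using that by (simp add: Ps_def)
  have left: "\<exists>\<gamma>. system_admissible L a r b c Arc Gbox N \<gamma> \<and> \<gamma> 0 = hd (fst (Ps!0)) + off (snd (Ps!0)) \<and>
      \<gamma> 1 = last (fst (last Ps)) + off (snd (last Ps))"
  proof (rule assemble)
    show "Ps \<noteq> []" using lPs j by auto
    fix i
    show "i < length Ps \<Longrightarrow> good (fst (Ps!i)) \<and> snd (Ps!i) \<in> {1..N}" using Psi lPs A B j by auto
    assume i: "Suc i < length Ps"
    then have ji: "j - i \<ge> 2" using lPs by simp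
    have e1: "last (fst (Ps!i)) = zL" "snd (Ps!i) = j - i" using Psi[of i] i lPs A B by auto
    have e2: "hd (fst (Ps!Suc i)) = zR" "snd (Ps!Suc i) = j - i - 1" using Psi[of "Suc i"] i lPs B by auto
    have c1: "zL + off (j - i) = Complex (real (j - i - 1) * L) y0"
      unfolding zL_def offv by (simp add: complex_eq_iff)
    have c2: "zR + off (j - i - 1) = Complex (real (j - i - 1) * L) y0"
      unfolding zR_def offv using ji by (simp add: complex_eq_iff of_nat_diff algebra_simps)
    have "j - i - 1 \<in> {1..<N}" using ji j by auto
    show "last (fst (Ps!i)) + off (snd (Ps!i)) = hd (fst (Ps!Suc i)) + off (snd (Ps!Suc i)) \<and>
        snd (Ps!i) \<noteq> snd (Ps!Suc i) \<and> (\<exists>l\<in>{1..<N}. hd (fst (Ps!Suc i)) + off (snd (Ps!Suc i)) \<in> shift (real l * L) (left_opening a))"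
    proof -
      have sh: "hd (fst (Ps!Suc i)) + off (snd (Ps!Suc i)) \<in> shift (real (j - i - 1) * L) (left_opening a)"
        using e2 c2 in_shift_left[OF conjI[OF y0(1,2)] c2] by simp
      have eq: "last (fst (Ps!i)) + off (snd (Ps!i)) = hd (fst (Ps!Suc i)) + off (snd (Ps!Suc i))"
        using e1 e2 c1 c2 by simp
      have neq: "snd (Ps!i) \<noteq> snd (Ps!Suc i)" using e1 e2 ji by simp
      show ?thesis using eq neq sh \<open>j - i - 1 \<in> {1..<N}\<close> by blast
    qed
  qed
  have L0: "hd (fst (Ps!0)) + off (snd (Ps!0)) = \<theta>" using Psi[of 0] j A by (simp add: \<theta>'_def)
  have L1: "last (fst (last Ps)) + off (snd (last Ps)) \<in> left_opening a"
  proof -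
    have "Ps \<noteq> []" using lPs j by auto
    then have "last Ps = Ps!(j - 1)" using lPs by (simp add: last_conv_nth)
    then have "last (fst (last Ps)) = zL" "snd (last Ps) = 1" using Psi[of "j - 1"] j A B by auto
    then show ?thesis using y0 unfolding zL_def off_def left_opening_def by auto
  qed
  define Rs where "Rs = map (\<lambda>i. if i = 0 then (A', j) else (B', j + i)) [0..<N - j + 1]"
  have lRs: "length Rs = N - j + 1" by (simp add: Rs_def)
  have Rsi: "Rs!i = (if i = 0 then (A', j) else (B', j + i))" if "i < N - j + 1" for i
    using that by (simp add: Rs_def del: upt_Suc)
  have right: "\<exists>\<gamma>. system_admissible L a r b c Arc Gbox N \<gamma> \<and> \<gamma> 0 = hd (fst (Rs!0)) + off (snd (Rs!0)) \<and>
      \<gamma> 1 = last (fst (last Rs)) + off (snd (last Rs))"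
  proof (rule assemble)
    show "Rs \<noteq> []" using lRs by auto
    fix i
    show "i < length Rs \<Longrightarrow> good (fst (Rs!i)) \<and> snd (Rs!i) \<in> {1..N}" using Rsi lRs A' B' j by auto
    assume i: "Suc i < length Rs"
    then have ji: "j + i + 1 \<le> N" using lRs j by simp
    have e1: "last (fst (Rs!i)) = zR" "snd (Rs!i) = j + i" using Rsi[of i] i lRs A' B' by auto
    have e2: "hd (fst (Rs!Suc i)) = zL" "snd (Rs!Suc i) = j + i + 1" using Rsi[of "Suc i"] i lRs B' by auto
    have c1: "zR + off (j + i) = Complex (real (j + i) * L) y0"
      unfolding zR_def offv using j by (simp add: complex_eq_iff of_nat_diff algebra_simps)
    have c2: "zL + off (j + i + 1) = Complex (real (j + i) * L) y0"
      unfolding zL_def offv by (simp add: complex_eq_iff)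
    have "j + i \<in> {1..<N}" using ji j by auto
    show "last (fst (Rs!i)) + off (snd (Rs!i)) = hd (fst (Rs!Suc i)) + off (snd (Rs!Suc i)) \<and>
        snd (Rs!i) \<noteq> snd (Rs!Suc i) \<and> (\<exists>l\<in>{1..<N}. hd (fst (Rs!Suc i)) + off (snd (Rs!Suc i)) \<in> shift (real l * L) (left_opening a))"
    proof -
      have sh: "hd (fst (Rs!Suc i)) + off (snd (Rs!Suc i)) \<in> shift (real (j + i) * L) (left_opening a)"
        using e2 c2 in_shift_left[OF conjI[OF y0(1,2)] c2] by simp
      have eq: "last (fst (Rs!i)) + off (snd (Rs!i)) = hd (fst (Rs!Suc i)) + off (snd (Rs!Suc i))"
        using e1 e2 c1 c2 by simp
      have neq: "snd (Rs!i) \<noteq> snd (Rs!Suc i)" using e1 e2 by simp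
      show ?thesis using eq neq sh \<open>j + i \<in> {1..<N}\<close> by blast
    qed
  qed
  have R0: "hd (fst (Rs!0)) + off (snd (Rs!0)) = \<theta>" using Rsi[of 0] j A' by (simp add: \<theta>'_def)
  have R1: "last (fst (last Rs)) + off (snd (last Rs)) \<in> shift (real (N - 1) * L) (right_opening L a)"
  proof -
    have "Rs \<noteq> []" using lRs by auto
    then have "last Rs = Rs!(N - j)" using lRs by (simp add: last_conv_nth)
    then have "last (fst (last Rs)) = zR" "snd (last Rs) = N" using Rsi[of "N - j"] j A' B' by auto
    then show ?thesis using y0 unfolding zR_def off_def shift_def right_opening_def by auto
  qed
  show ?thesis using left right L0 L1 R0 R1 by metis
qed

end

theorem lemma3:
  fixes L a r :: real and b N j :: nat and c :: "nat \<Rightarrow> complex" and rho :: "nat \<Rightarrow> real"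
    and Arc :: "nat \<Rightarrow> complex set" and Gbox :: "complex set" and \<theta> :: complex
  assumes geom: "cell_geometry L a r b c rho Arc Gbox"
    and ctrl: "one_controllable L a r b c Arc Gbox"
    and j: "1 \<le> j" "j \<le> N"
    and theta: "\<theta> \<in> sphere (disk_center L + complex_of_real (real (j - 1) * L)) r"
  shows "(\<exists>\<gamma>. system_admissible L a r b c Arc Gbox N \<gamma> \<and> \<gamma> 0 = \<theta> \<and> \<gamma> 1 \<in> left_opening a) \<and>
         (\<exists>\<gamma>. system_admissible L a r b c Arc Gbox N \<gamma> \<and> \<gamma> 0 = \<theta> \<and>
               \<gamma> 1 \<in> shift (real (N - 1) * L) (right_opening L a))"
proof -
  have "cellctx L a r b c rho Arc Gbox" using geom by (simp add: cellctx_def)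
  then show ?thesis using cellctx.main[OF _ ctrl j theta] by blast
qed

end
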